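(* Assume the standing setting below with $p=2$, and let $\theta=1-\Theta/2$. For every $f\in L^2(\partial\Omega,\nu)$ with $\int_{\partial\Omega}f\,d\nu=0$ there exists $w_f\in B^\theta_{2,2}(\partial\Omega)$ in the domain of $\mathcal A$ with $\mathcal Aw_f=f$, i.e. $\mathcal E_2(w_f,v)=-\int_{\partial\Omega}vf\,d\nu$ for all $v\in B^\theta_{2,2}(\partial\Omega)$.
   Context: Standing setting: $(X,d,\mu)$ complete metric measure space with $\mu$ Radon, $\Omega\subset X$ a connected open set, $\partial\Omega=\overline\Omega\setminus\Omega$, such that: (H0) $\Omega$ is a John domain (in particular bounded); (H1) $\mu|_{\overline\Omega}$ is doubling and $(\overline\Omega,d,\mu)$ supports a $2$-Poincaré inequality; (H2) $\partial\Omega$ carries a Radon measure $\nu$ with $C^{-1}\mu(B(x,r)\cap\Omega)r^{-\Theta}\le\nu(B(x,r))\le C\mu(B(x,r)\cap\Omega)r^{-\Theta}$ for $x\in\partial\Omega$, $0<r<2\operatorname{diam}\partial\Omega$, with $0<\Theta<2$; in particular $0<\nu(\partial\Omega)<\infty$. Besov: $\|u\|_{\theta,2}^2=\int\int\frac{|u(y)-u(x)|^2}{d(x,y)^{2\theta}\nu(B(x,d(x,y)))}d\nu(y)d\nu(x)$ over $\partial\Omega\times\partial\Omega$, $B^\theta_{2,2}(\partial\Omega)=\{u\in L^2:\|u\|_{\theta,2}<\infty\}$; $\mathcal E_2(u,v)=\int_{\partial\Omega}\int_{\partial\Omega}\frac{(u(y)-u(x))(v(y)-v(x))}{d(x,y)^{2\theta}\nu(B(y,d(x,y)))}d\nu(x)d\nu(y)$.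 A function $u\in B^\theta_{2,2}(\partial\Omega)$ is in the domain of $\mathcal A$ with $\mathcal Au=f\in L^2(\partial\Omega)$ if $\mathcal E_2(u,v)=-\int_{\partial\Omega}vf\,d\nu$ for all $v\in B^\theta_{2,2}(\partial\Omega)$. *)

theory Defs
  imports "HOL-Analysis.Analysis"
begin

definition radon_measure :: "'a::metric_space measure \<Rightarrow> bool" where
  "radon_measure M \<longleftrightarrow>
     sets M = sets borel \<and>
     (\<forall>x. \<exists>r>0. emeasure M (ball x r) < \<infinity>) \<and>
     (\<forall>A\<in>sets borel. emeasure M A = (INF U\<in>{U. open U \<and> A \<subseteq> U}. emeasure M U)) \<and>
     (\<forall>U. open U \<longrightarrow> emeasure M U = (SUP K\<in>{K. compact K \<and> K \<subseteq> U}. emeasure M K))"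

definition curve_length :: "(real \<Rightarrow> 'a::metric_space) \<Rightarrow> real \<Rightarrow> real \<Rightarrow> ennreal" where
  "curve_length \<gamma> s t =
     (SUP (n, p) \<in> {(n, p). p 0 = s \<and> p n = t \<and> (\<forall>i<n. p i \<le> p (Suc i))}.
        ennreal (\<Sum>i<n. dist (\<gamma> (p i)) (\<gamma> (p (Suc i)))))"

definition arclength_curve :: "(real \<Rightarrow> 'a::metric_space) \<Rightarrow> real \<Rightarrow> bool" where
  "arclength_curve \<gamma> l \<longleftrightarrow> 0 \<le> l \<and>
     (\<forall>s t. 0 \<le> s \<and> s \<le> t \<and> t \<le> l \<longrightarrow> curve_length \<gamma> s t = ennreal (t - s))"

definition john_domain :: "'a::metric_space set \<Rightarrow> bool" where
  "john_domain \<Omega> \<longleftrightarrow>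
     (\<exists>C\<ge>1. \<exists>x0\<in>\<Omega>. \<forall>x\<in>\<Omega>. \<exists>l \<gamma>. arclength_curve \<gamma> l \<and> \<gamma> 0 = x \<and> \<gamma> l = x0 \<and>
        \<gamma> ` {0..l} \<subseteq> \<Omega> \<and> (\<forall>t\<in>{0..l}. t \<le> C * infdist (\<gamma> t) (- \<Omega>)))"

definition doubling_on :: "'a::metric_space measure \<Rightarrow> 'a set \<Rightarrow> bool" where
  "doubling_on \<mu> Y \<longleftrightarrow>
     (\<exists>C. \<forall>x\<in>Y. \<forall>r>0. 0 < emeasure \<mu> (ball x r \<inter> Y) \<and> emeasure \<mu> (ball x r \<inter> Y) < \<infinity> \<and>
        emeasure \<mu> (ball x (2*r) \<inter> Y) \<le> ennreal C * emeasure \<mu> (ball x r \<inter> Y))"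

definition upper_gradient_on :: "'a::metric_space set \<Rightarrow> ('a \<Rightarrow> real) \<Rightarrow> ('a \<Rightarrow> ennreal) \<Rightarrow> bool" where
  "upper_gradient_on Y u g \<longleftrightarrow> g \<in> borel_measurable borel \<and>
     (\<forall>\<gamma> l. arclength_curve \<gamma> l \<and> \<gamma> ` {0..l} \<subseteq> Y \<longrightarrow>
        ennreal \<bar>u (\<gamma> 0) - u (\<gamma> l)\<bar> \<le> (\<integral>\<^sup>+ t\<in>{0..l}. g (\<gamma> t) \<partial>lborel))"

text \<open>\<open>(Y,d,\<mu>)\<close> supports a 2-Poincare inequality: there are \<open>C>0\<close>, \<open>\<lambda>\<ge>1\<close> with
  \<open>\<fint>\<^sub>B |u-u\<^sub>B| \<le> C r (\<fint>\<^sub>\<lambda>\<^sub>B g\<^sup>2)\<^sup>1\<^sup>/\<^sup>2\<close> for all balls \<open>B = B(x,r)\<inter>Y\<close>, all locally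
  integrable \<open>u\<close> and all upper gradients \<open>g\<close> of \<open>u\<close>; written in squared form.\<close>
definition poincare2_on :: "'a::metric_space measure \<Rightarrow> 'a set \<Rightarrow> bool" where
  "poincare2_on \<mu> Y \<longleftrightarrow>
     (\<exists>C>0. \<exists>L\<ge>1. \<forall>u g. u \<in> borel_measurable \<mu> \<and>
        (\<forall>x\<in>Y. \<forall>r>0. set_integrable \<mu> (ball x r \<inter> Y) u) \<and> upper_gradient_on Y u g \<longrightarrow>
        (\<forall>x\<in>Y. \<forall>r>0.
          let B = ball x r \<inter> Y; B' = ball x (L*r) \<inter> Y;
              uB = (\<integral> y\<in>B. u y \<partial>\<mu>) / measure \<mu> B
          in ((\<integral>\<^sup>+ y\<in>B. ennreal \<bar>u y - uB\<bar> \<partial>\<mu>) / emeasure \<mu> B) ^ 2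
             \<le> ennreal ((C * r)^2) * ((\<integral>\<^sup>+ y\<in>B'. g y ^ 2 \<partial>\<mu>) / emeasure \<mu> B')))"

definition besov_seminorm_sq :: "'a::metric_space measure \<Rightarrow> 'a set \<Rightarrow> real \<Rightarrow> ('a \<Rightarrow> real) \<Rightarrow> ennreal" where
  "besov_seminorm_sq \<nu> S \<theta> u =
     (\<integral>\<^sup>+ x\<in>S. (\<integral>\<^sup>+ y\<in>S. ennreal ((u y - u x)\<^sup>2 /
        (dist x y powr (2*\<theta>) * measure \<nu> (ball x (dist x y)))) \<partial>\<nu>) \<partial>\<nu>)"

definition besov22 :: "'a::metric_space measure \<Rightarrow> 'a set \<Rightarrow> real \<Rightarrow> ('a \<Rightarrow> real) set" where
  "besov22 \<nu> S \<theta> = {u. u \<in> borel_measurable \<nu> \<and> set_integrable \<nu> S (\<lambda>x. (u x)\<^sup>2) \<and>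
                          besov_seminorm_sq \<nu> S \<theta> u < \<infinity>}"

definition E2 :: "'a::metric_space measure \<Rightarrow> 'a set \<Rightarrow> real \<Rightarrow> ('a \<Rightarrow> real) \<Rightarrow> ('a \<Rightarrow> real) \<Rightarrow> real" where
  "E2 \<nu> S \<theta> u v =
     (\<integral> y\<in>S. (\<integral> x\<in>S. (u y - u x) * (v y - v x) /
        (dist x y powr (2*\<theta>) * measure \<nu> (ball y (dist x y))) \<partial>\<nu>) \<partial>\<nu>)"

end

theory Submission
  imports Defs
begin


definition comb :: "real \<Rightarrow> ('a \<Rightarrow> real) \<Rightarrow> real \<Rightarrow> ('a \<Rightarrow> real) \<Rightarrow> 'a \<Rightarrow> real" where
  "comb a u b v = (\<lambda>z. a * u z + b * v z)"

locale absform =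
  fixes V :: "('a \<Rightarrow> real) set" and B :: "('a \<Rightarrow> real) \<Rightarrow> ('a \<Rightarrow> real) \<Rightarrow> real"
    and L :: "('a \<Rightarrow> real) \<Rightarrow> real"
    and K :: real
  assumes V0: "(\<lambda>z. 0) \<in> V"
    and Vc: "\<And>u v a b. u \<in> V \<Longrightarrow> v \<in> V \<Longrightarrow> comb a u b v \<in> V"
    and Bsym: "\<And>u v. u \<in> V \<Longrightarrow> v \<in> V \<Longrightarrow> B u v = B v u"
    and Blin: "\<And>u v w a b. u \<in> V \<Longrightarrow> v \<in> V \<Longrightarrow> w \<in> V \<Longrightarrow> B (comb a u b v) w = a * B u w + b * B v w"
    and Bpos: "\<And>u. u \<in> V \<Longrightarrow> B u u \<ge> 0"
    and Llin: "\<And>u v a b. u \<in> V \<Longrightarrow> v \<in> V \<Longrightarrow> L (comb a u b v) = a * L u + b * L v"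
    and Lbd: "\<And>u. u \<in> V \<Longrightarrow> (L u)\<^sup>2 \<le> K * B u u"
    and complete: "\<And>u :: nat \<Rightarrow> 'a \<Rightarrow> real. (\<forall>n. u n \<in> V) \<Longrightarrow>
        (\<forall>e>0. \<exists>N. \<forall>n\<ge>N. \<forall>m\<ge>N. B (comb 1 (u n) (-1) (u m)) (comb 1 (u n) (-1) (u m)) < e) \<Longrightarrow>
        \<exists>w\<in>V. \<exists>r. strict_mono r \<and> (\<lambda>j. B (comb 1 (u (r j)) (-1) w) (comb 1 (u (r j)) (-1) w)) \<longlonglongrightarrow> 0
              \<and> (\<lambda>j. L (u (r j))) \<longlonglongrightarrow> L w"
begin

lemma Blin2: "u \<in> V \<Longrightarrow> v \<in> V \<Longrightarrow> w \<in> V \<Longrightarrow> B w (comb a u b v) = a * B w u + b * B w v"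
  using Blin Bsym Vc by metis

lemma Qcomb: assumes "u \<in> V" "v \<in> V"
  shows "B (comb a u b v) (comb a u b v) = a^2 * B u u + 2*a*b * B u v + b^2 * B v v"
proof -
  have "B (comb a u b v) (comb a u b v) = a * B u (comb a u b v) + b * B v (comb a u b v)"
    using assms Vc Blin by blast
  also have "\<dots> = a * (a * B u u + b * B u v) + b * (a * B v u + b * B v v)"
    using assms Blin2 by simp
  finally show ?thesis using Bsym[OF assms] by (simp add: power2_eq_square algebra_simps)
qed

lemma CS: assumes "u \<in> V" "v \<in> V" shows "\<bar>B u v\<bar> \<le> sqrt (B u u) * sqrt (B v v)"
proof -
  have key: "2 * \<bar>B u v\<bar> \<le> d * B u u + B v v / d" if "d > 0" for d
  proof -
    have "0 \<le> B (comb d u 1 v) (comb d u 1 v)" "0 \<le> B (comb d u (-1) v) (comb d u (-1) v)"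
      using Bpos Vc assms by auto
    then have "0 \<le> d^2 * B u u + 2*d * B u v + B v v" "0 \<le> d^2 * B u u - 2*d * B u v + B v v"
      using Qcomb[OF assms] by auto
    then have "2*d*\<bar>B u v\<bar> \<le> d^2 * B u u + B v v" by (auto simp: abs_if)
    then have "2*\<bar>B u v\<bar> \<le> (d^2 * B u u + B v v) / d" using that by (simp add: field_simps)
    also have "\<dots> = d * B u u + B v v / d" using that by (simp add: field_simps power2_eq_square)
    finally show ?thesis .
  qed
  have pu: "B u u \<ge> 0" and pv: "B v v \<ge> 0" using Bpos assms by auto
  show ?thesis
  proof (cases "B u u = 0")
    case True
    have "\<bar>B u v\<bar> \<le> e" if "e > 0" for e
    proof -
      have "2 * \<bar>B u v\<bar> \<le> B v v / ((B v v + 1) / (2*e))"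
        using key[of "(B v v + 1) / (2*e)"] True that pv by simp
      also have "\<dots> = 2 * e * (B v v / (B v v + 1))" using that pv by (simp add: field_simps)
      also have "\<dots> \<le> 2 * e * 1" using that pv by (intro mult_left_mono) auto
      finally show ?thesis by simp
    qed
    then have "\<bar>B u v\<bar> \<le> 0" by (meson dense not_le)
    then show ?thesis using True by simp
  next
    case False
    then have pu': "B u u > 0" using pu by simp
    show ?thesis
    proof (cases "B v v = 0")
      case True
      have "\<bar>B u v\<bar> \<le> e" if "e > 0" for e
      proof -
        have "2 * \<bar>B u v\<bar> \<le> (2*e / (B u u)) * B u u"
          using key[of "2*e / B u u"] True that pu' by simp
        also have "\<dots> = 2*e" using pu' by simp
        finally show ?thesis by simp
      qed
      then have "\<bar>B u v\<bar> \<le> 0" by (meson dense not_le)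
      then show ?thesis using True by simp
    next
      case False
      then have pv': "B v v > 0" using pv by simp
      define d where "d = sqrt (B v v) / sqrt (B u u)"
      have d: "d > 0" using pu' pv' by (simp add: d_def)
      have "2 * \<bar>B u v\<bar> \<le> d * B u u + B v v / d" by (rule key[OF d])
      also have "d * B u u = sqrt (B v v) * sqrt (B u u)"
        using pu' by (simp add: d_def field_simps)
      also have "B v v / d = sqrt (B v v) * sqrt (B u u)"
        using pu' pv' by (simp add: d_def field_simps)
      finally show ?thesis by simp
    qed
  qed
qed

lemma comb_eq_ext: "u = comb 1 w 1 (comb 1 u (-1) w)"
  by (simp add: comb_def fun_eq_iff)

theorem exists_solution: "\<exists>w\<in>V. \<forall>v\<in>V. B w v = - L v"
proof -
  define J where "J u = B u u / 2 + L u" for u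
  define K' where "K' = max K 0"
  have K': "K' \<ge> 0" by (simp add: K'_def max_def)
  have Jlow: "J u \<ge> - K' / 2" if u: "u \<in> V" for u
  proof -
    have Q: "B u u \<ge> 0" using Bpos u by simp
    have "(L u)\<^sup>2 \<le> K' * B u u" using Lbd[OF u] Q
      by (metis K'_def max.cobounded1 mult_right_mono order_trans)
    then have "\<bar>L u\<bar> \<le> sqrt (K' * B u u)" by (metis real_sqrt_abs real_sqrt_le_mono)
    also have "\<dots> = sqrt K' * sqrt (B u u)" by (simp add: real_sqrt_mult)
    finally have a: "L u \<ge> - (sqrt K' * sqrt (B u u))" by simp
    have "0 \<le> (sqrt (B u u) - sqrt K')\<^sup>2" by simp
    also have "\<dots> = B u u + K' - 2 * sqrt K' * sqrt (B u u)"
      using Q K' by (simp add: power2_diff)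
    finally show ?thesis using a by (simp add: J_def)
  qed
  define m where "m = Inf (J ` V)"
  have bdd: "bdd_below (J ` V)" using Jlow by (intro bdd_belowI[of _ "-K'/2"]) auto
  have ne: "J ` V \<noteq> {}" using V0 by auto
  have mle: "m \<le> J u" if "u \<in> V" for u unfolding m_def using bdd that by (simp add: cInf_lower)
  have "\<exists>u\<in>V. J u < m + 1 / (real n + 1)" for n
  proof -
    have "Inf (J ` V) < m + 1 / (real n + 1)" unfolding m_def by simp
    from cInf_lessD[OF ne this] show ?thesis by auto
  qed
  then obtain u where uV: "\<And>n. u n \<in> V" and uJ: "\<And>n. J (u n) < m + 1 / (real n + 1)"
    by metis
  have par: "B (comb 1 a (-1) b) (comb 1 a (-1) b) \<le> 4 * (J a + J b - 2 * m)" if ab: "a \<in> V" "b \<in> V" for a b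
  proof -
    have "m \<le> J (comb (1/2) a (1/2) b)" using mle Vc ab by auto
    also have "\<dots> = (B a a / 4 + B a b / 2 + B b b / 4) / 2 + (L a + L b) / 2"
      unfolding J_def using Qcomb[OF ab, of "1/2" "1/2"] Llin[OF ab] by (simp add: power2_eq_square)
    finally have "m \<le> (B a a / 4 + B a b / 2 + B b b / 4) / 2 + (L a + L b) / 2" .
    moreover have "B (comb 1 a (-1) b) (comb 1 a (-1) b) = B a a - 2 * B a b + B b b"
      using Qcomb[OF ab, of 1 "-1"] by simp
    ultimately show ?thesis unfolding J_def by (simp add: field_simps)
  qed
  have cauchy: "\<forall>e>0. \<exists>N. \<forall>n\<ge>N. \<forall>k\<ge>N. B (comb 1 (u n) (-1) (u k)) (comb 1 (u n) (-1) (u k)) < e"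
  proof (intro allI impI)
    fix e :: real assume e: "e > 0"
    obtain N :: nat where N: "8 / e < real N" using reals_Archimedean2 by blast
    have N': "8 / (real N + 1) < e" using N e by (simp add: field_simps)
    show "\<exists>N. \<forall>n\<ge>N. \<forall>k\<ge>N. B (comb 1 (u n) (-1) (u k)) (comb 1 (u n) (-1) (u k)) < e"
    proof (intro exI[of _ N] allI impI)
      fix n k assume nk: "n \<ge> N" "k \<ge> N"
      have h: "1 / (real i + 1) \<le> 1 / (real N + 1)" if "i \<ge> N" for i
        using that by (simp add: frac_le)
      have "B (comb 1 (u n) (-1) (u k)) (comb 1 (u n) (-1) (u k)) \<le> 4 * (J (u n) + J (u k) - 2 * m)"
        using par uV by blast
      also have "\<dots> \<le> 4 * (1 / (real N + 1) + 1 / (real N + 1))"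
        using uJ[of n] uJ[of k] h[OF nk(1)] h[OF nk(2)] by simp
      also have "\<dots> = 8 / (real N + 1)" by simp
      finally show "B (comb 1 (u n) (-1) (u k)) (comb 1 (u n) (-1) (u k)) < e" using N' by simp
    qed
  qed
  have ex: "\<exists>w\<in>V. \<exists>r. strict_mono r \<and> (\<lambda>j. B (comb 1 (u (r j)) (-1) w) (comb 1 (u (r j)) (-1) w)) \<longlonglongrightarrow> 0
              \<and> (\<lambda>j. L (u (r j))) \<longlonglongrightarrow> L w"
    using complete[of u] uV cauchy by simp
  then obtain w r where wV: "w \<in> V" and r: "strict_mono r"
    and Qlim: "(\<lambda>j. B (comb 1 (u (r j)) (-1) w) (comb 1 (u (r j)) (-1) w)) \<longlonglongrightarrow> 0"
    and Llim: "(\<lambda>j. L (u (r j))) \<longlonglongrightarrow> L w" by (elim bexE exE conjE)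
  define e where "e j = comb 1 (u (r j)) (-1) w" for j
  have eV: "e j \<in> V" for j using Vc uV wV by (simp add: e_def)
  have Qe: "(\<lambda>j. B (e j) (e j)) \<longlonglongrightarrow> 0" using Qlim by (simp add: e_def)
  have Qu: "B (u (r j)) (u (r j)) = B w w + 2 * B w (e j) + B (e j) (e j)" for j
  proof -
    have "u (r j) = comb 1 w 1 (e j)" unfolding e_def by (rule comb_eq_ext)
    then show ?thesis using Qcomb[OF wV eV, of 1 1] by simp
  qed
  have Be: "(\<lambda>j. B w (e j)) \<longlonglongrightarrow> 0"
  proof -
    have "(\<lambda>j. sqrt (B w w) * sqrt (B (e j) (e j))) \<longlonglongrightarrow> sqrt (B w w) * sqrt 0"
      by (intro tendsto_intros Qe)
    then have l0: "(\<lambda>j. sqrt (B w w) * sqrt (B (e j) (e j))) \<longlonglongrightarrow> 0" by simp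
    have ev: "\<forall>\<^sub>F j in sequentially. norm (B w (e j)) \<le> sqrt (B w w) * sqrt (B (e j) (e j))"
      by (intro always_eventually allI) (simp add: CS[OF wV eV])
    show ?thesis by (rule Lim_null_comparison[OF ev l0])

  qed
  have "(\<lambda>j. J (u (r j))) \<longlonglongrightarrow> B w w / 2 + L w"
  proof -
    have "(\<lambda>j. (B w w + 2 * B w (e j) + B (e j) (e j)) / 2 + L (u (r j))) \<longlonglongrightarrow> (B w w + 2 * 0 + 0) / 2 + L w"
      by (intro tendsto_intros Be Qe Llim) simp_all
    then show ?thesis unfolding J_def Qu by simp
  qed
  moreover have "(\<lambda>j. J (u (r j))) \<longlonglongrightarrow> m"
  proof (rule tendsto_sandwich[of "\<lambda>j. m" _ _ "\<lambda>j. m + 1 / (real j + 1)"])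
    show "\<forall>\<^sub>F j in sequentially. m \<le> J (u (r j))" using mle uV by auto
    have "J (u (r j)) \<le> m + 1 / (real j + 1)" for j
    proof -
      have "j \<le> r j" using r by (simp add: seq_suble)
      then have "1 / (real (r j) + 1) \<le> 1 / (real j + 1)" by (simp add: frac_le)
      then show ?thesis using uJ[of "r j"] by simp
    qed
    then show "\<forall>\<^sub>F j in sequentially. J (u (r j)) \<le> m + 1 / (real j + 1)" by auto
    have "(\<lambda>j. m + inverse (real (Suc j))) \<longlonglongrightarrow> m" by (rule LIMSEQ_inverse_real_of_nat_add)
    then show "(\<lambda>j. m + 1 / (real j + 1)) \<longlonglongrightarrow> m" by (simp add: inverse_eq_divide add.commute)
  qed simp
  ultimately have Jw: "J w = m" unfolding J_def using LIMSEQ_unique by blast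
  show ?thesis
  proof (intro bexI[OF _ wV] ballI)
    fix v assume vV: "v \<in> V"
    define c where "c = B w v + L v"
    define q where "q = B v v"
    have q: "q \<ge> 0" using Bpos vV by (simp add: q_def)
    have ineq: "0 \<le> t * c + t^2 * q / 2" for t
    proof -
      have "m \<le> J (comb 1 w t v)" using mle Vc wV vV by auto
      also have "\<dots> = J w + t * c + t^2 * q / 2"
        unfolding J_def c_def q_def using Qcomb[OF wV vV, of 1 t] Llin[OF wV vV, of 1 t]
        by (simp add: algebra_simps)
      finally show ?thesis using Jw by simp
    qed
    have "c = 0"
    proof (rule ccontr)
      assume "c \<noteq> 0"
      then have c2: "c^2 > 0" by simp
      define t where "t = - c / (q + 1)"
      have "0 \<le> t * c + t^2 * q / 2" by (rule ineq)
      then have "0 \<le> 2 * (q+1)^2 * (t * c + t^2 * q / 2)" using q by simp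
      also have "2 * (q+1)^2 * (t * c + t^2 * q / 2) = c^2 * (- q - 2)"
      proof -
        have q1: "q + 1 \<noteq> 0" using q by simp
        have "t * c = -(c^2) / (q+1)" unfolding t_def by (simp add: power2_eq_square)
        moreover have "t^2 = c^2 / (q+1)^2" unfolding t_def by (simp add: power_divide)
        ultimately have "2 * (q+1)^2 * (t * c + t^2 * q / 2) = 2 * (q+1)^2 * (-(c^2) / (q+1)) + c^2 * q"
          using q1 by (simp add: algebra_simps)
        also have "2 * (q+1)^2 * (-(c^2) / (q+1)) = - 2 * (q+1) * c^2"
          using q1 by (simp add: power2_eq_square field_simps)
        finally show ?thesis by (simp add: algebra_simps)
      qed
      finally have "0 \<le> c^2 * (- q - 2)" .
      moreover have "c^2 * (- q - 2) < 0" using c2 q by (intro mult_pos_neg) auto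
      ultimately show False by linarith
    qed
    then show "B w v = - L v" by (simp add: c_def)
  qed
qed

end


locale bset =
  fixes \<nu> :: "'a::metric_space measure" and S :: "'a set" and \<theta> :: real and D :: "'a set" and R :: real
  assumes sets_nu[measurable_cong]: "sets \<nu> = sets borel"
    and S_borel[measurable]: "S \<in> sets borel"
    and nu_S_null: "emeasure \<nu> (- S) = 0"
    and nu_S_pos: "0 < emeasure \<nu> S" and nu_S_fin: "emeasure \<nu> S < \<infinity>"
    and D_count: "countable D" and nu_T_null: "emeasure \<nu> (- closure D) = 0"
    and R_pos: "R > 0" and S_bdd: "\<And>x y. x \<in> S \<Longrightarrow> y \<in> S \<Longrightarrow> dist x y \<le> R"
    and theta_pos: "\<theta> > 0"
begin

abbreviation "T \<equiv> closure D"

lemma space_nu[simp]: "space \<nu> = UNIV"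
  using sets_eq_imp_space_eq[OF sets_nu] by simp

lemma sets_nu_iff[simp]: "A \<in> sets \<nu> \<longleftrightarrow> A \<in> sets borel"
  by (simp add: sets_nu)

lemma T_borel[measurable]: "T \<in> sets borel" by simp

lemma nu_UNIV: "emeasure \<nu> UNIV = emeasure \<nu> S"
proof -
  have "emeasure \<nu> UNIV = emeasure \<nu> S + emeasure \<nu> (- S)"
    by (subst plus_emeasure) (auto simp: Compl_eq_Diff_UNIV)
  then show ?thesis using nu_S_null by simp
qed

sublocale finite_measure \<nu>
  by standard (use nu_UNIV nu_S_fin in \<open>auto simp: less_top\<close>)

sublocale pair_sigma_finite \<nu> \<nu> ..

lemma sf: "sigma_finite_measure \<nu>" by unfold_locales

lemma AE_S: "AE x in \<nu>. x \<in> S"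
  by (rule AE_I'[of "- S"]) (auto intro!: null_setsI nu_S_null)

lemma AE_T: "AE x in \<nu>. x \<in> T"
  by (rule AE_I'[of "- T"]) (auto intro!: null_setsI nu_T_null)

lemma dist_meas1[measurable]: "(\<lambda>x. dist x q) \<in> borel_measurable borel"
  by (intro borel_measurable_continuous_onI continuous_intros)

lemma dist_meas2[measurable]: "(\<lambda>x. dist q x) \<in> borel_measurable borel"
  by (intro borel_measurable_continuous_onI continuous_intros)

definition dT :: "'a \<times> 'a \<Rightarrow> ennreal" where
  "dT p = (INF q\<in>D. ennreal (dist (fst p) q + dist q (snd p)))"

lemma dT_meas[measurable]: "dT \<in> borel_measurable (\<nu> \<Otimes>\<^sub>M \<nu>)"
  unfolding dT_def by (rule borel_measurable_INF[OF D_count]) measurable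

lemma dT_eq: assumes x: "x \<in> T" shows "dT (y, x) = ennreal (dist y x)"
proof (rule antisym)
  show "dT (y, x) \<le> ennreal (dist y x)"
  proof (rule ennreal_le_epsilon)
    fix e :: real assume e: "0 < e"
    obtain q where q: "q \<in> D" "dist q x < e/2"
      using x e closure_approachable[of x D] by (metis half_gt_zero)
    have "dT (y, x) \<le> ennreal (dist y q + dist q x)"
      unfolding dT_def using q by (intro INF_lower2[OF q(1)]) auto
    also have "\<dots> \<le> ennreal (dist y x + e)"
    proof (rule ennreal_leI)
      have "dist y q \<le> dist y x + dist x q" by (rule dist_triangle)
      then show "dist y q + dist q x \<le> dist y x + e" using q(2) by (simp add: dist_commute)
    qed
    also have "\<dots> = ennreal (dist y x) + ennreal e" using e by (simp add: ennreal_plus)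
    finally show "dT (y, x) \<le> ennreal (dist y x) + ennreal e" .
  qed
  show "ennreal (dist y x) \<le> dT (y, x)"
    unfolding dT_def by (intro INF_greatest ennreal_leI) (simp add: dist_triangle)
qed

definition bm :: "'a \<times> 'a \<Rightarrow> ennreal" where
  "bm p = (\<integral>\<^sup>+ z. indicator T z * indicator T (snd p) *
             (if dT (fst p, z) < dT (fst p, snd p) then 1 else 0) \<partial>\<nu>)"

lemma bm_meas[measurable]: "bm \<in> borel_measurable (\<nu> \<Otimes>\<^sub>M \<nu>)"
proof -
  have [measurable]: "(\<lambda>p. dT (fst (fst p), snd p)) \<in> borel_measurable ((\<nu> \<Otimes>\<^sub>M \<nu>) \<Otimes>\<^sub>M \<nu>)"
    by (rule measurable_compose[OF _ dT_meas]) measurable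
  have [measurable]: "(\<lambda>p. dT (fst p)) \<in> borel_measurable ((\<nu> \<Otimes>\<^sub>M \<nu>) \<Otimes>\<^sub>M \<nu>)"
    by (rule measurable_compose[OF _ dT_meas]) measurable
  show ?thesis unfolding bm_def
  proof (rule sigma_finite_measure.borel_measurable_nn_integral[OF sf, where f="\<lambda>p z. indicator T z * indicator T (snd p) *
             (if dT (fst p, z) < dT (fst p, snd p) then 1 else 0)"])
    show "(\<lambda>(p, z). indicator T z * indicator T (snd p) *
             (if dT (fst p, z) < dT (fst p, snd p) then 1 else 0 :: ennreal)) \<in> borel_measurable ((\<nu> \<Otimes>\<^sub>M \<nu>) \<Otimes>\<^sub>M \<nu>)"
      unfolding case_prod_beta by measurable
  qed
qed

lemma bm_eq: assumes x: "x \<in> T" shows "bm (y, x) = emeasure \<nu> (ball y (dist x y))"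
proof -
  have "bm (y, x) = (\<integral>\<^sup>+ z. indicator (ball y (dist x y)) z \<partial>\<nu>)"
    unfolding bm_def
  proof (rule nn_integral_cong_AE)
    show "AE z in \<nu>. indicator T z * indicator T (snd (y, x)) *
             (if dT (fst (y, x), z) < dT (fst (y, x), snd (y, x)) then 1 else 0) =
          (indicator (ball y (dist x y)) z :: ennreal)"
      using AE_T
    proof eventually_elim
      case (elim z)
      then show ?case using x by (simp add: dT_eq ennreal_less_iff dist_commute)
    qed
  qed
  also have "\<dots> = emeasure \<nu> (ball y (dist x y))" by simp
  finally show ?thesis .
qed

definition kern :: "'a \<Rightarrow> 'a \<Rightarrow> real" where
  "kern y x = indicator S y * indicator S x * indicator T x /
              (dist x y powr (2*\<theta>) * measure \<nu> (ball y (dist x y)))"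

lemma kern_meas[measurable]: "(\<lambda>p. kern (fst p) (snd p)) \<in> borel_measurable (\<nu> \<Otimes>\<^sub>M \<nu>)"
proof -
  have "(\<lambda>p. indicator S (fst p) * indicator S (snd p) * indicator T (snd p) /
              (enn2real (dT p) powr (2*\<theta>) * enn2real (bm p))) \<in> borel_measurable (\<nu> \<Otimes>\<^sub>M \<nu>)"
    by measurable
  moreover have "kern (fst p) (snd p) = indicator S (fst p) * indicator S (snd p) * indicator T (snd p) /
              (enn2real (dT p) powr (2*\<theta>) * enn2real (bm p))" for p
  proof (cases "snd p \<in> T")
    case True
    then show ?thesis using dT_eq[OF True, of "fst p"] bm_eq[OF True, of "fst p"]
      by (cases p) (simp add: kern_def measure_def dist_commute)
  next
    case False
    then show ?thesis by (simp add: kern_def)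
  qed
  ultimately show ?thesis by simp
qed

lemma kern_nonneg: "kern y x \<ge> 0"
  unfolding kern_def by (intro divide_nonneg_nonneg mult_nonneg_nonneg) auto

lemma psf: "pair_sigma_finite \<nu> \<nu>" by unfold_locales

definition Psi :: "('a \<Rightarrow> real) \<Rightarrow> ('a \<Rightarrow> real) \<Rightarrow> 'a \<times> 'a \<Rightarrow> real" where
  "Psi u v p = (u (fst p) - u (snd p)) * (v (fst p) - v (snd p)) * kern (fst p) (snd p)"

lemma Psi_meas[measurable]:
  assumes [measurable]: "u \<in> borel_measurable borel" "v \<in> borel_measurable borel"
  shows "Psi u v \<in> borel_measurable (\<nu> \<Otimes>\<^sub>M \<nu>)"
  unfolding Psi_def by measurable

lemma Psi_sq_nonneg: "Psi u u p \<ge> 0"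
  unfolding Psi_def using kern_nonneg by (simp add: mult_nonneg_nonneg)

lemma ballm_meas[measurable]: "(\<lambda>x. measure \<nu> (ball y (dist x y))) \<in> borel_measurable borel"
proof -
  have "mono (\<lambda>r. measure \<nu> (ball y r))"
    by (intro monoI finite_measure_mono) auto
  then have "(\<lambda>r. measure \<nu> (ball y r)) \<in> borel_measurable borel" by (rule borel_measurable_mono)
  from measurable_compose[OF dist_meas1[of y] this] show ?thesis by simp
qed

lemma besov_eq:
  assumes [measurable]: "u \<in> borel_measurable borel"
  shows "besov_seminorm_sq \<nu> S \<theta> u = (\<integral>\<^sup>+ p. ennreal (Psi u u p) \<partial>(\<nu> \<Otimes>\<^sub>M \<nu>))"
proof -
  have "(\<integral>\<^sup>+ p. ennreal (Psi u u p) \<partial>(\<nu> \<Otimes>\<^sub>M \<nu>)) = (\<integral>\<^sup>+ a. \<integral>\<^sup>+ b. ennreal (Psi u u (a, b)) \<partial>\<nu> \<partial>\<nu>)"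
    by (rule sigma_finite_measure.nn_integral_fst[OF sf, symmetric]) measurable
  also have "\<dots> = besov_seminorm_sq \<nu> S \<theta> u"
    unfolding besov_seminorm_sq_def
  proof (intro nn_integral_cong)
    fix a
    show "(\<integral>\<^sup>+ b. ennreal (Psi u u (a, b)) \<partial>\<nu>) =
      (\<integral>\<^sup>+ y. ennreal ((u y - u a)\<^sup>2 / (dist a y powr (2 * \<theta>) * measure \<nu> (ball a (dist a y)))) * indicator S y \<partial>\<nu>) * indicator S a"
    proof (cases "a \<in> S")
      case False
      then show ?thesis by (simp add: Psi_def kern_def)
    next
      case True
      have "(\<integral>\<^sup>+ b. ennreal (Psi u u (a, b)) \<partial>\<nu>) =
        (\<integral>\<^sup>+ y. ennreal ((u y - u a)\<^sup>2 / (dist a y powr (2 * \<theta>) * measure \<nu> (ball a (dist a y)))) * indicator S y \<partial>\<nu>)"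
      proof (rule nn_integral_cong_AE)
        show "AE b in \<nu>. ennreal (Psi u u (a, b)) =
          ennreal ((u b - u a)\<^sup>2 / (dist a b powr (2 * \<theta>) * measure \<nu> (ball a (dist a b)))) * indicator S b"
          using AE_T
        proof eventually_elim
          case (elim b)
          have sq: "(u a - u b) * (u a - u b) = (u b - u a)\<^sup>2" by (simp add: power2_eq_square algebra_simps)
          show ?case using True elim
            by (cases "b \<in> S") (simp_all add: Psi_def kern_def dist_commute sq)
        qed
      qed
      then show ?thesis using True by simp
    qed
  qed
  finally show ?thesis ..
qed

lemma E2_eq:
  assumes [measurable]: "u \<in> borel_measurable borel" "v \<in> borel_measurable borel"
    and int: "integrable (\<nu> \<Otimes>\<^sub>M \<nu>) (Psi u v)"
  shows "E2 \<nu> S \<theta> u v = (\<integral> p. Psi u v p \<partial>(\<nu> \<Otimes>\<^sub>M \<nu>))"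
proof -
  have inner: "indicator S y * (\<integral> x. indicator S x * ((u y - u x) * (v y - v x) /
        (dist x y powr (2*\<theta>) * measure \<nu> (ball y (dist x y)))) \<partial>\<nu>) = (\<integral> x. Psi u v (y, x) \<partial>\<nu>)" for y
  proof -
    have m1: "(\<lambda>x. Psi u v (y, x)) \<in> borel_measurable \<nu>"
      by (rule measurable_Pair2[OF Psi_meas]) (use assms in auto)
    have "(\<integral> x. Psi u v (y, x) \<partial>\<nu>) = (\<integral> x. indicator S y * (indicator S x * ((u y - u x) * (v y - v x) /
        (dist x y powr (2*\<theta>) * measure \<nu> (ball y (dist x y))))) \<partial>\<nu>)"
    proof (rule integral_cong_AE)
      show "(\<lambda>x. indicator S y * (indicator S x * ((u y - u x) * (v y - v x) /
        (dist x y powr (2*\<theta>) * measure \<nu> (ball y (dist x y)))))) \<in> borel_measurable \<nu>"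
        by measurable
      show "AE x in \<nu>. Psi u v (y, x) = indicator S y * (indicator S x * ((u y - u x) * (v y - v x) /
        (dist x y powr (2*\<theta>) * measure \<nu> (ball y (dist x y)))))"
        using AE_T by eventually_elim (simp add: Psi_def kern_def)
    qed (rule m1)
    then show ?thesis by (simp only: integral_mult_right_zero)
  qed
  have "E2 \<nu> S \<theta> u v = (\<integral> y. \<integral> x. Psi u v (y, x) \<partial>\<nu> \<partial>\<nu>)"
    unfolding E2_def set_lebesgue_integral_def using inner by simp
  also have "\<dots> = (\<integral> p. Psi u v p \<partial>(\<nu> \<Otimes>\<^sub>M \<nu>))"
    by (rule pair_sigma_finite.integral_fst'[OF psf int])
  finally show ?thesis .
qed

abbreviation "V \<equiv> besov22 \<nu> S \<theta>"

lemma meas_nu_iff: "(f :: 'a \<Rightarrow> real) \<in> borel_measurable \<nu> \<longleftrightarrow> f \<in> borel_measurable borel"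
  by (simp add: measurable_def sets_nu)

lemma V_meas: "u \<in> V \<Longrightarrow> u \<in> borel_measurable borel"
  by (simp add: besov22_def meas_nu_iff)

lemma V_sq: "u \<in> V \<Longrightarrow> set_integrable \<nu> S (\<lambda>x. (u x)\<^sup>2)"
  by (simp add: besov22_def)

lemma V_besov: "u \<in> V \<Longrightarrow> (\<integral>\<^sup>+ p. ennreal (Psi u u p) \<partial>(\<nu> \<Otimes>\<^sub>M \<nu>)) < \<infinity>"
  using besov_eq[OF V_meas, of u] unfolding besov22_def by simp

lemma VI: assumes "u \<in> borel_measurable borel" "set_integrable \<nu> S (\<lambda>x. (u x)\<^sup>2)"
    "(\<integral>\<^sup>+ p. ennreal (Psi u u p) \<partial>(\<nu> \<Otimes>\<^sub>M \<nu>)) < \<infinity>"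
  shows "u \<in> V"
  using assms besov_eq[OF assms(1)] unfolding besov22_def meas_nu_iff by simp

lemma V_Psi_int: assumes "u \<in> V" shows "integrable (\<nu> \<Otimes>\<^sub>M \<nu>) (Psi u u)"
proof (rule integrableI_nonneg)
  show "Psi u u \<in> borel_measurable (\<nu> \<Otimes>\<^sub>M \<nu>)" using V_meas[OF assms] by measurable
  show "AE x in \<nu> \<Otimes>\<^sub>M \<nu>. 0 \<le> Psi u u x" by (simp add: Psi_sq_nonneg)
  show "(\<integral>\<^sup>+ x. ennreal (Psi u u x) \<partial>(\<nu> \<Otimes>\<^sub>M \<nu>)) < \<infinity>" by (rule V_besov[OF assms])
qed

lemma Psi_bound: "\<bar>Psi u v p\<bar> \<le> (Psi u u p + Psi v v p) / 2"
proof -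
  define a where "a = u (fst p) - u (snd p)"
  define b where "b = v (fst p) - v (snd p)"
  define k where "k = kern (fst p) (snd p)"
  have k: "k \<ge> 0" using kern_nonneg by (simp add: k_def)
  have "0 \<le> (\<bar>a\<bar> - \<bar>b\<bar>)^2" by simp
  then have "\<bar>a * b\<bar> \<le> (a * a + b * b) / 2"
    by (simp add: power2_eq_square abs_mult algebra_simps abs_mult_self)
  then have "\<bar>a * b\<bar> * k \<le> (a * a + b * b) / 2 * k" using k by (rule mult_right_mono)
  then show ?thesis unfolding Psi_def a_def[symmetric] b_def[symmetric] k_def[symmetric]
    using k by (simp add: abs_mult algebra_simps)
qed

lemma V_Psi_int2: assumes "u \<in> V" "v \<in> V" shows "integrable (\<nu> \<Otimes>\<^sub>M \<nu>) (Psi u v)"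
proof (rule Bochner_Integration.integrable_bound)
  show "integrable (\<nu> \<Otimes>\<^sub>M \<nu>) (\<lambda>p. (Psi u u p + Psi v v p) / 2)"
    using V_Psi_int[OF assms(1)] V_Psi_int[OF assms(2)] by simp
  show "Psi u v \<in> borel_measurable (\<nu> \<Otimes>\<^sub>M \<nu>)" using V_meas[OF assms(1)] V_meas[OF assms(2)] by measurable
  show "AE x in \<nu> \<Otimes>\<^sub>M \<nu>. norm (Psi u v x) \<le> norm ((Psi u u x + Psi v v x) / 2)"
  proof (intro AE_I2)
    fix x
    have "norm (Psi u v x) \<le> (Psi u u x + Psi v v x) / 2" using Psi_bound by simp
    also have "\<dots> \<le> norm ((Psi u u x + Psi v v x) / 2)" using Psi_sq_nonneg[of u x] Psi_sq_nonneg[of v x] by simp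
    finally show "norm (Psi u v x) \<le> norm ((Psi u u x + Psi v v x) / 2)" .
  qed
qed

lemma E2_V: "u \<in> V \<Longrightarrow> v \<in> V \<Longrightarrow> E2 \<nu> S \<theta> u v = (\<integral> p. Psi u v p \<partial>(\<nu> \<Otimes>\<^sub>M \<nu>))"
  by (rule E2_eq[OF V_meas V_meas V_Psi_int2])

lemma Psi_comb: "Psi (comb a u b v) w p = a * Psi u w p + b * Psi v w p"
  unfolding Psi_def comb_def by (simp add: algebra_simps)

lemma Psi_sym: "Psi u v p = Psi v u p"
  unfolding Psi_def by (simp add: algebra_simps)

lemma set_int_prod:
  fixes u v :: "'a \<Rightarrow> real"
  assumes [measurable]: "u \<in> borel_measurable borel" "v \<in> borel_measurable borel"
    and "set_integrable \<nu> S (\<lambda>x. (u x)\<^sup>2)" "set_integrable \<nu> S (\<lambda>x. (v x)\<^sup>2)"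
  shows "set_integrable \<nu> S (\<lambda>x. u x * v x)"
  unfolding set_integrable_def
proof (rule Bochner_Integration.integrable_bound)
  show "integrable \<nu> (\<lambda>x. (indicator S x *\<^sub>R (u x)\<^sup>2 + indicator S x *\<^sub>R (v x)\<^sup>2) / 2)"
    using assms(3,4) unfolding set_integrable_def by simp
  show "(\<lambda>x. indicator S x *\<^sub>R (u x * v x)) \<in> borel_measurable \<nu>" by (simp add: meas_nu_iff) measurable
  show "AE x in \<nu>. norm (indicator S x *\<^sub>R (u x * v x)) \<le> norm ((indicator S x *\<^sub>R (u x)\<^sup>2 + indicator S x *\<^sub>R (v x)\<^sup>2) / 2)"
  proof (intro AE_I2)
    fix x
    have "0 \<le> (\<bar>u x\<bar> - \<bar>v x\<bar>)^2" by simp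
    then have "\<bar>u x * v x\<bar> \<le> ((u x)\<^sup>2 + (v x)\<^sup>2) / 2"
      by (simp add: power2_eq_square abs_mult algebra_simps abs_mult_self)
    then show "norm (indicator S x *\<^sub>R (u x * v x)) \<le> norm ((indicator S x *\<^sub>R (u x)\<^sup>2 + indicator S x *\<^sub>R (v x)\<^sup>2) / 2)"
      by (cases "x \<in> S") (auto simp: abs_mult)
  qed
qed

lemma set_int_const: "set_integrable \<nu> S (\<lambda>x. c::real)"
  unfolding set_integrable_def
  by (rule Bochner_Integration.integrable_bound[of _ "\<lambda>x. c"]) (auto split: split_indicator)

lemma V_comb: assumes "u \<in> V" "v \<in> V" shows "comb a u b v \<in> V"
proof (rule VI)
  note [measurable] = V_meas[OF assms(1)] V_meas[OF assms(2)]
  show "comb a u b v \<in> borel_measurable borel" unfolding comb_def by measurable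
  have "set_integrable \<nu> S (\<lambda>x. a^2 * (u x)\<^sup>2 + 2*a*b * (u x * v x) + b^2 * (v x)\<^sup>2)"
    using V_sq[OF assms(1)] V_sq[OF assms(2)] set_int_prod[OF _ _ V_sq[OF assms(1)] V_sq[OF assms(2)]]
    by (intro set_integral_add set_integrable_mult_right) auto
  then show "set_integrable \<nu> S (\<lambda>x. (comb a u b v x)\<^sup>2)"
    by (simp add: comb_def power2_eq_square algebra_simps)
  have "(\<integral>\<^sup>+ p. ennreal (Psi (comb a u b v) (comb a u b v) p) \<partial>(\<nu> \<Otimes>\<^sub>M \<nu>)) \<le>
        (\<integral>\<^sup>+ p. ennreal (2*a^2) * ennreal (Psi u u p) + ennreal (2*b^2) * ennreal (Psi v v p) \<partial>(\<nu> \<Otimes>\<^sub>M \<nu>))"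
  proof (intro nn_integral_mono)
    fix p
    define x where "x = u (fst p) - u (snd p)"
    define y where "y = v (fst p) - v (snd p)"
    define k where "k = kern (fst p) (snd p)"
    have k: "k \<ge> 0" using kern_nonneg by (simp add: k_def)
    have e1: "Psi (comb a u b v) (comb a u b v) p = (a*x + b*y)^2 * k"
      by (simp add: Psi_def comb_def x_def y_def k_def power2_eq_square algebra_simps)
    have e2: "Psi u u p = x^2 * k" "Psi v v p = y^2 * k"
      by (simp_all add: Psi_def x_def y_def k_def power2_eq_square)
    have "0 \<le> (a*x - b*y)^2" by simp
    then have "(a*x + b*y)^2 \<le> 2*a^2*x^2 + 2*b^2*y^2"
      by (simp add: power2_eq_square algebra_simps)
    then have "(a*x + b*y)^2 * k \<le> (2*a^2*x^2 + 2*b^2*y^2) * k" using k by (rule mult_right_mono)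
    then have "ennreal ((a*x + b*y)^2 * k) \<le> ennreal (2*a^2 * (x^2*k) + 2*b^2 * (y^2*k))"
      by (intro ennreal_leI) (simp add: algebra_simps)
    also have "\<dots> = ennreal (2*a^2) * ennreal (x^2*k) + ennreal (2*b^2) * ennreal (y^2*k)"
      using k by (simp add: ennreal_plus ennreal_mult)
    finally show "ennreal (Psi (comb a u b v) (comb a u b v) p) \<le>
        ennreal (2*a^2) * ennreal (Psi u u p) + ennreal (2*b^2) * ennreal (Psi v v p)"
      using e1 e2 by simp
  qed
  also have "\<dots> = ennreal (2*a^2) * (\<integral>\<^sup>+ p. ennreal (Psi u u p) \<partial>(\<nu> \<Otimes>\<^sub>M \<nu>)) +
                  ennreal (2*b^2) * (\<integral>\<^sup>+ p. ennreal (Psi v v p) \<partial>(\<nu> \<Otimes>\<^sub>M \<nu>))"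
    by (simp add: nn_integral_add nn_integral_cmult)
  also have "\<dots> < \<infinity>" using V_besov[OF assms(1)] V_besov[OF assms(2)]
    by (simp add: ennreal_mult_eq_top_iff less_top[symmetric])
  finally show "(\<integral>\<^sup>+ p. ennreal (Psi (comb a u b v) (comb a u b v) p) \<partial>(\<nu> \<Otimes>\<^sub>M \<nu>)) < \<infinity>" .
qed

lemma V_const: "(\<lambda>z. c) \<in> V"
  by (rule VI) (simp_all add: Psi_def set_int_const)

lemma E2_sym: "u \<in> V \<Longrightarrow> v \<in> V \<Longrightarrow> E2 \<nu> S \<theta> u v = E2 \<nu> S \<theta> v u"
  by (simp add: E2_V Psi_sym)

lemma E2_lin: assumes "u \<in> V" "v \<in> V" "w \<in> V"
  shows "E2 \<nu> S \<theta> (comb a u b v) w = a * E2 \<nu> S \<theta> u w + b * E2 \<nu> S \<theta> v w"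
  using assms V_comb[OF assms(1,2)] V_Psi_int2[OF assms(1,3)] V_Psi_int2[OF assms(2,3)]
  by (simp add: E2_V Psi_comb)

lemma E2_pos: "u \<in> V \<Longrightarrow> E2 \<nu> S \<theta> u u \<ge> 0"
  by (simp add: E2_V Psi_sq_nonneg)

lemma E2_nn: assumes "u \<in> V"
  shows "ennreal (E2 \<nu> S \<theta> u u) = (\<integral>\<^sup>+ p. ennreal (Psi u u p) \<partial>(\<nu> \<Otimes>\<^sub>M \<nu>))"
  using assms by (simp add: E2_V nn_integral_eq_integral[OF V_Psi_int] Psi_sq_nonneg)

lemma AE_pos_ball: "AE y in \<nu>. \<forall>r>0. emeasure \<nu> (ball y r) > 0"
proof -
  have c: "countable (D \<times> \<rat>)" using D_count countable_rat by (intro countable_SIGMA) auto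
  have "AE y in \<nu>. \<forall>p\<in>D \<times> \<rat>. emeasure \<nu> (ball (fst p) (snd p)) = 0 \<longrightarrow> y \<notin> ball (fst p) (snd p)"
  proof (subst AE_ball_countable[OF c], intro ballI)
    fix p :: "'a \<times> real"
    show "AE y in \<nu>. emeasure \<nu> (ball (fst p) (snd p)) = 0 \<longrightarrow> y \<notin> ball (fst p) (snd p)"
    proof (cases "emeasure \<nu> (ball (fst p) (snd p)) = 0")
      case True
      have "ball (fst p) (snd p) \<in> null_sets \<nu>" using True by (intro null_setsI) auto
      from AE_not_in[OF this] show ?thesis by simp
    next
      case False
      then show ?thesis by simp
    qed
  qed
  with AE_T show ?thesis
  proof eventually_elim
    case (elim y)
    show ?case
    proof (intro allI impI)
      fix r :: real assume r: "r > 0"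
      show "emeasure \<nu> (ball y r) > 0"
      proof (rule ccontr)
        assume "\<not> emeasure \<nu> (ball y r) > 0"
        then have z: "emeasure \<nu> (ball y r) = 0" by (simp add: not_gr_zero)
        obtain q where q: "q \<in> D" "dist q y < r/3"
          using elim(1) r closure_approachable[of y D] by (metis divide_pos_pos zero_less_numeral)
        obtain s where s: "s \<in> \<rat>" "r/3 < s" "s < 2*r/3" using Rats_dense_in_real[of "r/3" "2*r/3"] r by auto
        have sub: "ball q s \<subseteq> ball y r"
        proof
          fix z assume "z \<in> ball q s"
          then have "dist q z < s" by simp
          moreover have "dist y z \<le> dist y q + dist q z" by (rule dist_triangle)
          ultimately show "z \<in> ball y r" using q(2) s by (simp add: dist_commute)
        qed
        have "emeasure \<nu> (ball q s) \<le> emeasure \<nu> (ball y r)" by (rule emeasure_mono[OF sub]) simp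
        then have "emeasure \<nu> (ball q s) = 0" using z by simp
        with elim(2) q(1) s(1) have "y \<notin> ball q s" by auto
        moreover have "y \<in> ball q s" using q(2) s(2) by simp
        ultimately show False by simp
      qed
    qed
  qed
qed

definition "mS = measure \<nu> S"

lemma mS_pos: "mS > 0"
  using nu_S_pos nu_S_fin by (simp add: mS_def measure_def enn2real_positive_iff)

lemma measure_le_mS: "measure \<nu> A \<le> mS"
proof -
  have "measure \<nu> A \<le> measure \<nu> UNIV"
    by (metis bounded_measure space_nu)
  also have "measure \<nu> UNIV = mS" using nu_UNIV by (simp add: mS_def measure_def)
  finally show ?thesis .
qed

lemma set_int_of_sq:
  fixes u :: "'a \<Rightarrow> real"
  assumes [measurable]: "u \<in> borel_measurable borel" and sq: "set_integrable \<nu> S (\<lambda>x. (u x)\<^sup>2)"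
  shows "set_integrable \<nu> S u"
  unfolding set_integrable_def
proof (rule Bochner_Integration.integrable_bound)
  show "integrable \<nu> (\<lambda>x. indicator S x *\<^sub>R (1::real) + indicator S x *\<^sub>R (u x)\<^sup>2)"
    using set_int_const[of 1] sq unfolding set_integrable_def by simp
  show "(\<lambda>x. indicator S x *\<^sub>R u x) \<in> borel_measurable \<nu>" by (simp add: meas_nu_iff) measurable
  show "AE x in \<nu>. norm (indicator S x *\<^sub>R u x) \<le> norm (indicator S x *\<^sub>R (1::real) + indicator S x *\<^sub>R (u x)\<^sup>2)"
  proof (intro AE_I2)
    fix x
    have "0 \<le> (\<bar>u x\<bar> - 1)^2" by simp
    then have "2 * \<bar>u x\<bar> \<le> (u x)\<^sup>2 + 1" by (simp add: power2_eq_square algebra_simps abs_mult_self)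
    then have "\<bar>u x\<bar> \<le> 1 + (u x)\<^sup>2" using zero_le_power2[of "u x"] by linarith
    then show "norm (indicator S x *\<^sub>R u x) \<le> norm (indicator S x *\<^sub>R (1::real) + indicator S x *\<^sub>R (u x)\<^sup>2)"
      by (cases "x \<in> S") auto
  qed
qed

definition "Rp = R powr (2*\<theta>)"

lemma Rp_pos: "Rp > 0" using R_pos by (simp add: Rp_def)

lemma kern_lower:
  assumes y: "y \<in> S" "\<forall>r>0. emeasure \<nu> (ball y r) > 0" and x: "x \<in> S" "x \<in> T" "x \<noteq> y"
  shows "kern y x \<ge> 1 / (Rp * mS)"
proof -
  define d where "d = dist x y"
  have d: "d > 0" "d \<le> R" using x y S_bdd[of x y] by (auto simp: d_def)
  have p1: "d powr (2*\<theta>) \<le> Rp" unfolding Rp_def using d theta_pos by (intro powr_mono2) auto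
  have p0: "d powr (2*\<theta>) > 0" using d by simp
  have m0: "measure \<nu> (ball y d) > 0"
    using y(2) d(1) by (simp add: measure_def enn2real_positive_iff less_top[symmetric])
  have m1: "measure \<nu> (ball y d) \<le> mS" by (rule measure_le_mS)
  have den: "d powr (2*\<theta>) * measure \<nu> (ball y d) \<le> Rp * mS"
    using p0 p1 m0 m1 Rp_pos by (intro mult_mono) auto
  have "1 / (Rp * mS) \<le> 1 / (d powr (2*\<theta>) * measure \<nu> (ball y d))"
    using den p0 m0 Rp_pos mS_pos by (intro divide_left_mono) auto
  also have "\<dots> = kern y x" using x y by (simp add: kern_def d_def)
  finally show ?thesis .
qed

lemma poincare:
  assumes u: "u \<in> V" and mean: "set_lebesgue_integral \<nu> S u = 0"
  shows "set_lebesgue_integral \<nu> S (\<lambda>x. (u x)\<^sup>2) \<le> Rp * E2 \<nu> S \<theta> u u"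
proof -
  note [measurable] = V_meas[OF u]
  define c where "c = 1 / (Rp * mS)"
  have c: "c > 0" using Rp_pos mS_pos by (simp add: c_def)
  have iu: "integrable \<nu> (\<lambda>x. indicator S x * u x)" using set_int_of_sq[OF V_meas[OF u] V_sq[OF u]]
    by (simp add: set_integrable_def)
  have iu2: "integrable \<nu> (\<lambda>x. indicator S x * (u x)\<^sup>2)" using V_sq[OF u] by (simp add: set_integrable_def)
  have i1: "integrable \<nu> (\<lambda>x. indicator S x * (1::real))" using set_int_const[of 1] by (simp add: set_integrable_def)
  have mean': "(\<integral> x. indicator S x * u x \<partial>\<nu>) = 0" using mean by (simp add: set_lebesgue_integral_def)
  have inner: "(\<integral> x. indicator S x * (u y - u x)\<^sup>2 \<partial>\<nu>) = mS * (u y)\<^sup>2 + set_lebesgue_integral \<nu> S (\<lambda>x. (u x)\<^sup>2)" for y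
  proof -
    have "(\<lambda>x. indicator S x * (u y - u x)\<^sup>2) =
          (\<lambda>x. (u y)\<^sup>2 * (indicator S x * 1) - 2 * u y * (indicator S x * u x) + indicator S x * (u x)\<^sup>2)"
      by (auto simp: power2_eq_square algebra_simps)
    then have "(\<integral> x. indicator S x * (u y - u x)\<^sup>2 \<partial>\<nu>) =
      (u y)\<^sup>2 * (\<integral> x. indicator S x * 1 \<partial>\<nu>) - 2 * u y * (\<integral> x. indicator S x * u x \<partial>\<nu>) + (\<integral> x. indicator S x * (u x)\<^sup>2 \<partial>\<nu>)"
      using iu iu2 i1 by simp
    also have "(\<integral> x. indicator S x * (1::real) \<partial>\<nu>) = mS" by (simp add: mS_def)
    finally show ?thesis using mean' by (simp add: set_lebesgue_integral_def)
  qed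
  have "ennreal (c * (mS * set_lebesgue_integral \<nu> S (\<lambda>x. (u x)\<^sup>2))) =
        (\<integral>\<^sup>+ y. ennreal (c * mS * (indicator S y * (u y)\<^sup>2)) \<partial>\<nu>)"
  proof -
    have "(\<integral>\<^sup>+ y. ennreal (c * mS * (indicator S y * (u y)\<^sup>2)) \<partial>\<nu>) = ennreal (\<integral> y. c * mS * (indicator S y * (u y)\<^sup>2) \<partial>\<nu>)"
      using iu2 c mS_pos by (intro nn_integral_eq_integral) auto
    then show ?thesis by (simp add: set_lebesgue_integral_def mult.assoc)
  qed
  also have "\<dots> \<le> (\<integral>\<^sup>+ y. \<integral>\<^sup>+ x. ennreal (c * indicator S y * (indicator S x * (u y - u x)\<^sup>2)) \<partial>\<nu> \<partial>\<nu>)"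
  proof (intro nn_integral_mono)
    fix y
    have int: "integrable \<nu> (\<lambda>x. indicator S x * (u y - u x)\<^sup>2)"
    proof -
      have "(\<lambda>x. indicator S x * (u y - u x)\<^sup>2) =
          (\<lambda>x. (u y)\<^sup>2 * (indicator S x * 1) - 2 * u y * (indicator S x * u x) + indicator S x * (u x)\<^sup>2)"
        by (auto simp: power2_eq_square algebra_simps)
      then show ?thesis using iu iu2 i1 by simp
    qed
    have "(\<integral>\<^sup>+ x. ennreal (c * indicator S y * (indicator S x * (u y - u x)\<^sup>2)) \<partial>\<nu>) =
          ennreal (\<integral> x. c * indicator S y * (indicator S x * (u y - u x)\<^sup>2) \<partial>\<nu>)"
      using int c by (intro nn_integral_eq_integral) auto
    also have "\<dots> = ennreal (c * indicator S y * (mS * (u y)\<^sup>2 + set_lebesgue_integral \<nu> S (\<lambda>x. (u x)\<^sup>2)))"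
      using inner[of y] by simp
    also have "\<dots> \<ge> ennreal (c * mS * (indicator S y * (u y)\<^sup>2))"
    proof (intro ennreal_leI)
      have "0 \<le> set_lebesgue_integral \<nu> S (\<lambda>x. (u x)\<^sup>2)"
        unfolding set_lebesgue_integral_def by (intro integral_nonneg_AE) auto
      then show "c * mS * (indicator S y * (u y)\<^sup>2) \<le> c * indicator S y * (mS * (u y)\<^sup>2 + set_lebesgue_integral \<nu> S (\<lambda>x. (u x)\<^sup>2))"
        using c by (cases "y \<in> S") (auto simp: algebra_simps)
    qed
    finally show "ennreal (c * mS * (indicator S y * (u y)\<^sup>2)) \<le>
       (\<integral>\<^sup>+ x. ennreal (c * indicator S y * (indicator S x * (u y - u x)\<^sup>2)) \<partial>\<nu>)" .
  qed
  also have "\<dots> \<le> (\<integral>\<^sup>+ y. \<integral>\<^sup>+ x. ennreal (Psi u u (y, x)) \<partial>\<nu> \<partial>\<nu>)"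
  proof (intro nn_integral_mono_AE)
    show "AE y in \<nu>. (\<integral>\<^sup>+ x. ennreal (c * indicator S y * (indicator S x * (u y - u x)\<^sup>2)) \<partial>\<nu>)
        \<le> (\<integral>\<^sup>+ x. ennreal (Psi u u (y, x)) \<partial>\<nu>)"
      using AE_pos_ball
    proof eventually_elim
      case (elim y)
      note yf = elim
      show ?case
      proof (intro nn_integral_mono_AE)
        show "AE x in \<nu>. ennreal (c * indicator S y * (indicator S x * (u y - u x)\<^sup>2)) \<le> ennreal (Psi u u (y, x))"
          using AE_T
        proof eventually_elim
          case (elim x)
          show ?case
          proof (intro ennreal_leI)
            show "c * indicator S y * (indicator S x * (u y - u x)\<^sup>2) \<le> Psi u u (y, x)"
            proof (cases "y \<in> S \<and> x \<in> S \<and> x \<noteq> y")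
              case True
              have "c \<le> kern y x" unfolding c_def using True yf elim by (intro kern_lower) auto
              then have "c * (u y - u x)\<^sup>2 \<le> kern y x * (u y - u x)\<^sup>2" by (intro mult_right_mono) auto
              then show ?thesis using True by (simp add: Psi_def power2_eq_square algebra_simps)
            next
              case False
              then show ?thesis using Psi_sq_nonneg[of u "(y, x)"] by auto
            qed
          qed
        qed
      qed
    qed
  qed
  also have "\<dots> = (\<integral>\<^sup>+ p. ennreal (Psi u u p) \<partial>(\<nu> \<Otimes>\<^sub>M \<nu>))"
    by (rule sigma_finite_measure.nn_integral_fst[OF sf]) measurable
  also have "\<dots> = ennreal (E2 \<nu> S \<theta> u u)" using E2_nn[OF u] by simp
  finally have "c * (mS * set_lebesgue_integral \<nu> S (\<lambda>x. (u x)\<^sup>2)) \<le> E2 \<nu> S \<theta> u u"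
    using E2_pos[OF u] by (simp add: ennreal_le_iff)
  then show ?thesis using Rp_pos mS_pos by (simp add: c_def field_simps)
qed

lemma Psi_cong: "(\<And>y x. u' y - u' x = u y - u x) \<Longrightarrow> (\<And>y x. v' y - v' x = v y - v x) \<Longrightarrow> Psi u' v' = Psi u v"
  unfolding Psi_def by (simp add: fun_eq_iff)

lemma E2_cong: "(\<And>y x. u' y - u' x = u y - u x) \<Longrightarrow> (\<And>y x. v' y - v' x = v y - v x) \<Longrightarrow>
    E2 \<nu> S \<theta> u' v' = E2 \<nu> S \<theta> u v"
  unfolding E2_def by simp

lemma mean_zero_shift:
  assumes u: "u \<in> V"
  defines "g \<equiv> comb 1 u (- (set_lebesgue_integral \<nu> S u / mS)) (\<lambda>z. 1)"
  shows "g \<in> V" "set_lebesgue_integral \<nu> S g = 0"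
proof -
  show "g \<in> V" unfolding g_def using u V_const by (intro V_comb)
  have iu: "set_integrable \<nu> S u" by (rule set_int_of_sq[OF V_meas[OF u] V_sq[OF u]])
  have i1: "set_integrable \<nu> S (\<lambda>x. 1::real)" by (rule set_int_const)
  define c where "c = set_lebesgue_integral \<nu> S u / mS"
  have iu': "integrable \<nu> (\<lambda>x. indicator S x * u x)" using iu by (simp add: set_integrable_def)
  have iS: "integrable \<nu> (\<lambda>x. c * indicator S x :: real)"
    using i1 by (simp add: set_integrable_def)
  have eq: "(\<lambda>x. indicator S x *\<^sub>R g x) = (\<lambda>x. indicator S x * u x - c * indicator S x)"
    by (auto simp: g_def comb_def c_def fun_eq_iff split: split_indicator)
  have "set_lebesgue_integral \<nu> S g = (\<integral>x. indicator S x * u x \<partial>\<nu>) - c * mS"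
    unfolding set_lebesgue_integral_def eq using iu' iS by (simp add: mS_def)
  also have "(\<integral>x. indicator S x * u x \<partial>\<nu>) = set_lebesgue_integral \<nu> S u"
    by (simp add: set_lebesgue_integral_def)
  finally show "set_lebesgue_integral \<nu> S g = 0" using mS_pos by (simp add: c_def)
qed

lemma quad_cs:
  fixes A B C :: real
  assumes q: "\<And>t. 0 \<le> A + 2*t*C + t^2*B" and A: "A \<ge> 0" and B: "B \<ge> 0"
  shows "C^2 \<le> A * B"
proof (cases "B = 0")
  case True
  have "C = 0"
  proof (rule ccontr)
    assume C: "C \<noteq> 0"
    have "0 \<le> A + 2 * (- (A+1) / (2*C)) * C" using q[of "- (A+1) / (2*C)"] True by simp
    also have "\<dots> = -1" using C by (simp add: field_simps)
    finally show False by simp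
  qed
  then show ?thesis using True by simp
next
  case False
  then have B': "B > 0" using B by simp
  have "0 \<le> A + 2 * (-C/B) * C + (-C/B)^2 * B" by (rule q)
  also have "\<dots> = A - C^2 / B" using B' by (simp add: field_simps power2_eq_square)
  finally show ?thesis using B' by (simp add: field_simps)
qed

lemma L2_cs:
  fixes g h :: "'a \<Rightarrow> real"
  assumes [measurable]: "g \<in> borel_measurable borel" "h \<in> borel_measurable borel"
    and g2: "set_integrable \<nu> S (\<lambda>x. (g x)\<^sup>2)" and h2: "set_integrable \<nu> S (\<lambda>x. (h x)\<^sup>2)"
  shows "(set_lebesgue_integral \<nu> S (\<lambda>x. g x * h x))^2 \<le>
         set_lebesgue_integral \<nu> S (\<lambda>x. (g x)\<^sup>2) * set_lebesgue_integral \<nu> S (\<lambda>x. (h x)\<^sup>2)"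
proof (rule quad_cs)
  have gh: "set_integrable \<nu> S (\<lambda>x. g x * h x)" by (rule set_int_prod) (use g2 h2 in auto)
  fix t :: real
  have "0 \<le> set_lebesgue_integral \<nu> S (\<lambda>x. (g x + t * h x)\<^sup>2)"
    unfolding set_lebesgue_integral_def by (intro integral_nonneg_AE) auto
  also have "set_lebesgue_integral \<nu> S (\<lambda>x. (g x + t * h x)\<^sup>2) =
      set_lebesgue_integral \<nu> S (\<lambda>x. (g x)\<^sup>2 + (2*t) * (g x * h x) + t^2 * (h x)\<^sup>2)"
    by (simp add: power2_eq_square algebra_simps)
  also have "\<dots> = set_lebesgue_integral \<nu> S (\<lambda>x. (g x)\<^sup>2) + 2*t * set_lebesgue_integral \<nu> S (\<lambda>x. g x * h x) +
                    t^2 * set_lebesgue_integral \<nu> S (\<lambda>x. (h x)\<^sup>2)"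
    using g2 h2 gh by (simp add: set_integral_add set_integral_mult_right set_integrable_mult_right)
  finally show "0 \<le> set_lebesgue_integral \<nu> S (\<lambda>x. (g x)\<^sup>2) + 2*t * set_lebesgue_integral \<nu> S (\<lambda>x. g x * h x) +
                    t^2 * set_lebesgue_integral \<nu> S (\<lambda>x. (h x)\<^sup>2)" .
next
  show "0 \<le> set_lebesgue_integral \<nu> S (\<lambda>x. (g x)\<^sup>2)"
    unfolding set_lebesgue_integral_def by (intro integral_nonneg_AE) auto
  show "0 \<le> set_lebesgue_integral \<nu> S (\<lambda>x. (h x)\<^sup>2)"
    unfolding set_lebesgue_integral_def by (intro integral_nonneg_AE) auto
qed

end

locale bsetf = bset +
  fixes f :: "'a \<Rightarrow> real"
  assumes f_meas[measurable]: "f \<in> borel_measurable borel"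
    and f_sq: "set_integrable \<nu> S (\<lambda>x. (f x)\<^sup>2)"
    and f_mean: "set_lebesgue_integral \<nu> S f = 0"
begin

definition "Lf v = set_lebesgue_integral \<nu> S (\<lambda>x. v x * f x)"

lemma L_int: "v \<in> V \<Longrightarrow> set_integrable \<nu> S (\<lambda>x. v x * f x)"
  by (rule set_int_prod[OF V_meas f_meas V_sq f_sq])

lemma L_lin: assumes "u \<in> V" "v \<in> V" shows "Lf (comb a u b v) = a * Lf u + b * Lf v"
proof -
  have "Lf (comb a u b v) = set_lebesgue_integral \<nu> S (\<lambda>x. a * (u x * f x) + b * (v x * f x))"
    unfolding Lf_def comb_def by (simp add: algebra_simps)
  also have "\<dots> = a * Lf u + b * Lf v"
    unfolding Lf_def using L_int[OF assms(1)] L_int[OF assms(2)]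
    by (simp add: set_integral_add set_integral_mult_right set_integrable_mult_right)
  finally show ?thesis .
qed

lemma L_shift: assumes "u \<in> V" shows "Lf (comb 1 u c (\<lambda>z. 1)) = Lf u"
proof -
  have "Lf (comb 1 u c (\<lambda>z. 1)) = Lf u + c * Lf (\<lambda>z. 1)"
    using L_lin[OF assms V_const] by simp
  also have "Lf (\<lambda>z. 1) = 0" using f_mean by (simp add: Lf_def)
  finally show ?thesis by simp
qed

definition "Kf = Rp * set_lebesgue_integral \<nu> S (\<lambda>x. (f x)\<^sup>2)"

lemma L_cs: "g \<in> V \<Longrightarrow> (Lf g)^2 \<le> set_lebesgue_integral \<nu> S (\<lambda>x. (g x)\<^sup>2) * set_lebesgue_integral \<nu> S (\<lambda>x. (f x)\<^sup>2)"
  unfolding Lf_def by (rule L2_cs[OF V_meas f_meas V_sq f_sq])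

lemma L_bound: assumes u: "u \<in> V" shows "(Lf u)^2 \<le> Kf * E2 \<nu> S \<theta> u u"
proof -
  define g where "g = comb 1 u (- (set_lebesgue_integral \<nu> S u / mS)) (\<lambda>z. 1)"
  have gV: "g \<in> V" and gm: "set_lebesgue_integral \<nu> S g = 0"
    using mean_zero_shift[OF u] by (simp_all add: g_def)
  have "Lf u = Lf g" using L_shift[OF u] by (simp add: g_def)
  have F: "0 \<le> set_lebesgue_integral \<nu> S (\<lambda>x. (f x)\<^sup>2)"
    unfolding set_lebesgue_integral_def by (intro integral_nonneg_AE) auto
  have "(Lf u)^2 = (Lf g)^2" using \<open>Lf u = Lf g\<close> by simp
  also have "\<dots> \<le> set_lebesgue_integral \<nu> S (\<lambda>x. (g x)\<^sup>2) * set_lebesgue_integral \<nu> S (\<lambda>x. (f x)\<^sup>2)"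
    by (rule L_cs[OF gV])
  also have "\<dots> \<le> (Rp * E2 \<nu> S \<theta> g g) * set_lebesgue_integral \<nu> S (\<lambda>x. (f x)\<^sup>2)"
    by (intro mult_right_mono poincare[OF gV gm] F)
  also have "E2 \<nu> S \<theta> g g = E2 \<nu> S \<theta> u u" by (rule E2_cong) (simp_all add: g_def comb_def)
  finally show ?thesis by (simp add: Kf_def algebra_simps)
qed

lemma ae_conv:
  assumes bV: "\<And>j. b j \<in> V"
    and bd: "\<And>j. set_lebesgue_integral \<nu> S (\<lambda>z. (b (Suc j) z - b j z)\<^sup>2) \<le> (1/8)^j"
  shows "AE z in \<nu>. convergent (\<lambda>j. b j z)"
proof -
  have bm[measurable]: "b j \<in> borel_measurable borel" for j using V_meas[OF bV] .
  define e where "e j z = b (Suc j) z - b j z" for j z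
  have em[measurable]: "e j \<in> borel_measurable borel" for j unfolding e_def by measurable
  have int_e: "integrable \<nu> (\<lambda>z. indicator S z * (e j z)\<^sup>2)" for j
  proof -
    have "comb 1 (b (Suc j)) (-1) (b j) \<in> V" using bV by (intro V_comb)
    from V_sq[OF this] show ?thesis by (simp add: set_integrable_def comb_def e_def)
  qed
  have nn: "(\<integral>\<^sup>+ z. ennreal (2^j * (indicator S z * (e j z)\<^sup>2)) \<partial>\<nu>) \<le> ennreal ((1/4)^j)" for j
  proof -
    have "(\<integral>\<^sup>+ z. ennreal (2^j * (indicator S z * (e j z)\<^sup>2)) \<partial>\<nu>) = ennreal (\<integral> z. 2^j * (indicator S z * (e j z)\<^sup>2) \<partial>\<nu>)"
      using int_e[of j] by (intro nn_integral_eq_integral) auto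
    also have "(\<integral> z. 2^j * (indicator S z * (e j z)\<^sup>2) \<partial>\<nu>) = 2^j * set_lebesgue_integral \<nu> S (\<lambda>z. (b (Suc j) z - b j z)\<^sup>2)"
      by (simp add: set_lebesgue_integral_def e_def)
    also have "\<dots> \<le> 2^j * (1/8)^j" using bd[of j] by (intro mult_left_mono) auto
    also have "(2::real)^j * (1/8)^j = (1/4)^j" by (simp add: power_mult_distrib[symmetric])
    finally show ?thesis using ennreal_leI by blast
  qed
  have "(\<integral>\<^sup>+ z. (\<Sum>j. ennreal (2^j * (indicator S z * (e j z)\<^sup>2))) \<partial>\<nu>) = (\<Sum>j. \<integral>\<^sup>+ z. ennreal (2^j * (indicator S z * (e j z)\<^sup>2)) \<partial>\<nu>)"
    by (rule nn_integral_suminf) measurable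
  also have "\<dots> \<le> (\<Sum>j. ennreal ((1/4)^j))"
    by (intro suminf_le nn summableI)
  also have "\<dots> = ennreal (\<Sum>j. (1/4)^j)"
    by (intro suminf_ennreal2) (auto intro: summable_geometric)
  also have "\<dots> < \<infinity>" by simp
  finally have "(\<integral>\<^sup>+ z. (\<Sum>j. ennreal (2^j * (indicator S z * (e j z)\<^sup>2))) \<partial>\<nu>) \<noteq> \<infinity>" by simp
  then have "AE z in \<nu>. (\<Sum>j. ennreal (2^j * (indicator S z * (e j z)\<^sup>2))) \<noteq> \<infinity>"
    by (intro nn_integral_PInf_AE) measurable
  with AE_S show ?thesis
  proof eventually_elim
    case (elim z)
    then have "(\<Sum>j. ennreal (2^j * (e j z)\<^sup>2)) \<noteq> top" by simp
    then have sm: "summable (\<lambda>j. 2^j * (e j z)\<^sup>2)"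
      by (intro summable_suminf_not_top) auto
    define C where "C = (\<Sum>j. 2^j * (e j z)\<^sup>2)"
    have C: "2^j * (e j z)\<^sup>2 \<le> C" for j
      unfolding C_def using sum_le_suminf[OF sm, of "{j}"] by simp
    have C0: "C \<ge> 0" using C[of 0] by (metis order_trans zero_le_power2 mult_1 power_0)
    have eb: "norm (e j z) \<le> sqrt C * sqrt (1/2) ^ j" for j
    proof -
      have "(e j z)\<^sup>2 \<le> C * (1/2)^j" using C[of j] by (simp add: field_simps power_divide)
      then have "sqrt ((e j z)\<^sup>2) \<le> sqrt (C * (1/2)^j)" by (rule real_sqrt_le_mono)
      then have "\<bar>e j z\<bar> \<le> sqrt (C * (1/2)^j)" by (simp only: real_sqrt_abs)
      also have "sqrt (C * (1/2)^j) = sqrt C * sqrt (1/2) ^ j" by (simp only: real_sqrt_mult real_sqrt_power)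
      finally show ?thesis by simp
    qed
    have "summable (\<lambda>j. sqrt C * sqrt (1/2) ^ j)"
      by (intro summable_mult summable_geometric) simp
    then have se: "summable (\<lambda>j. e j z)" by (rule summable_comparison_test'[OF _ eb])
    have tel: "b j z = b 0 z + (\<Sum>i<j. e i z)" for j
      unfolding e_def using sum_lessThan_telescope[of "\<lambda>i. b i z" j] by simp
    have "(\<lambda>j. b 0 z + (\<Sum>i<j. e i z)) \<longlonglongrightarrow> b 0 z + (\<Sum>i. e i z)"
      by (intro tendsto_add tendsto_const summable_LIMSEQ se)
    then show "convergent (\<lambda>j. b j z)" unfolding tel[symmetric] convergent_def by blast
  qed
qed

lemma fatou_L2:
  assumes bm[measurable]: "\<And>j. b j \<in> borel_measurable borel" and wm[measurable]: "w \<in> borel_measurable borel"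
    and conv: "AE z in \<nu>. (\<lambda>j. b j z) \<longlonglongrightarrow> w z"
    and bd: "\<And>j. j \<ge> k \<Longrightarrow> set_lebesgue_integral \<nu> S (\<lambda>z. (b j z - b k z)\<^sup>2) \<le> \<epsilon>"
    and sqi: "\<And>j. set_integrable \<nu> S (\<lambda>z. (b j z - b k z)\<^sup>2)"
  shows "(\<integral>\<^sup>+ z. ennreal (indicator S z * (w z - b k z)\<^sup>2) \<partial>\<nu>) \<le> ennreal \<epsilon>"
proof -
  have "(\<integral>\<^sup>+ z. ennreal (indicator S z * (w z - b k z)\<^sup>2) \<partial>\<nu>) \<le>
        (\<integral>\<^sup>+ z. liminf (\<lambda>j. ennreal (indicator S z * (b j z - b k z)\<^sup>2)) \<partial>\<nu>)"
  proof (rule nn_integral_mono_AE)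
    show "AE z in \<nu>. ennreal (indicator S z * (w z - b k z)\<^sup>2) \<le> liminf (\<lambda>j. ennreal (indicator S z * (b j z - b k z)\<^sup>2))"
      using conv
    proof eventually_elim
      case (elim z)
      have "(\<lambda>j. ennreal (indicator S z * (b j z - b k z)\<^sup>2)) \<longlonglongrightarrow> ennreal (indicator S z * (w z - b k z)\<^sup>2)"
        by (intro tendsto_ennrealI tendsto_intros elim)
      then have "liminf (\<lambda>j. ennreal (indicator S z * (b j z - b k z)\<^sup>2)) = ennreal (indicator S z * (w z - b k z)\<^sup>2)"
        by (intro lim_imp_Liminf) auto
      then show ?case by simp
    qed
  qed
  also have "\<dots> \<le> liminf (\<lambda>j. \<integral>\<^sup>+ z. ennreal (indicator S z * (b j z - b k z)\<^sup>2) \<partial>\<nu>)"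
    by (rule nn_integral_liminf) measurable
  also have "\<dots> \<le> ennreal \<epsilon>"
  proof (rule Liminf_le)
    show "\<forall>\<^sub>F j in sequentially. (\<integral>\<^sup>+ z. ennreal (indicator S z * (b j z - b k z)\<^sup>2) \<partial>\<nu>) \<le> ennreal \<epsilon>"
      using eventually_ge_at_top[of k]
    proof eventually_elim
      case (elim j)
      have "(\<integral>\<^sup>+ z. ennreal (indicator S z * (b j z - b k z)\<^sup>2) \<partial>\<nu>) =
            ennreal (\<integral> z. indicator S z * (b j z - b k z)\<^sup>2 \<partial>\<nu>)"
        using sqi[of j] by (intro nn_integral_eq_integral) (auto simp: set_integrable_def)
      also have "\<dots> \<le> ennreal \<epsilon>" using bd[OF elim] by (intro ennreal_leI) (simp add: set_lebesgue_integral_def)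
      finally show ?case .
    qed
  qed simp
  finally show ?thesis .
qed

lemma fatou_Q:
  assumes bV: "\<And>j. b j \<in> V" and wm[measurable]: "w \<in> borel_measurable borel"
    and conv: "AE z in \<nu>. (\<lambda>j. b j z) \<longlonglongrightarrow> w z"
    and bd: "\<And>j. j \<ge> k \<Longrightarrow> E2 \<nu> S \<theta> (comb 1 (b j) (-1) (b k)) (comb 1 (b j) (-1) (b k)) \<le> \<epsilon>"
  shows "(\<integral>\<^sup>+ p. ennreal (Psi (\<lambda>z. w z - b k z) (\<lambda>z. w z - b k z) p) \<partial>(\<nu> \<Otimes>\<^sub>M \<nu>)) \<le> ennreal \<epsilon>"
proof -
  have bm[measurable]: "b j \<in> borel_measurable borel" for j using V_meas[OF bV] .
  define G where "G j p = ennreal (Psi (\<lambda>z. b j z - b k z) (\<lambda>z. b j z - b k z) p)" for j p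
  define F where "F p = ennreal (Psi (\<lambda>z. w z - b k z) (\<lambda>z. w z - b k z) p)" for p
  have Gm[measurable]: "G j \<in> borel_measurable (\<nu> \<Otimes>\<^sub>M \<nu>)" for j unfolding G_def by measurable
  have Fm[measurable]: "F \<in> borel_measurable (\<nu> \<Otimes>\<^sub>M \<nu>)" unfolding F_def by measurable
  have pt: "F (y, x) = liminf (\<lambda>j. G j (y, x))" if "(\<lambda>j. b j y) \<longlonglongrightarrow> w y" "(\<lambda>j. b j x) \<longlonglongrightarrow> w x" for y x
  proof -
    have "(\<lambda>j. G j (y, x)) \<longlonglongrightarrow> F (y, x)"
      unfolding G_def F_def Psi_def by (intro tendsto_ennrealI tendsto_intros) (simp_all add: that)
    then show ?thesis by (intro lim_imp_Liminf[symmetric]) auto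
  qed
  have "(\<integral>\<^sup>+ p. F p \<partial>(\<nu> \<Otimes>\<^sub>M \<nu>)) = (\<integral>\<^sup>+ y. \<integral>\<^sup>+ x. F (y, x) \<partial>\<nu> \<partial>\<nu>)"
    by (rule sigma_finite_measure.nn_integral_fst[OF sf, symmetric]) measurable
  also have "\<dots> \<le> (\<integral>\<^sup>+ y. \<integral>\<^sup>+ x. liminf (\<lambda>j. G j (y, x)) \<partial>\<nu> \<partial>\<nu>)"
  proof (rule nn_integral_mono_AE)
    show "AE y in \<nu>. (\<integral>\<^sup>+ x. F (y, x) \<partial>\<nu>) \<le> (\<integral>\<^sup>+ x. liminf (\<lambda>j. G j (y, x)) \<partial>\<nu>)"
      using conv
    proof eventually_elim
      case (elim y)
      note yc = elim
      show ?case
      proof (rule nn_integral_mono_AE)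
        show "AE x in \<nu>. F (y, x) \<le> liminf (\<lambda>j. G j (y, x))"
          using conv by eventually_elim (simp add: pt[OF yc])
      qed
    qed
  qed
  also have "\<dots> = (\<integral>\<^sup>+ p. liminf (\<lambda>j. G j p) \<partial>(\<nu> \<Otimes>\<^sub>M \<nu>))"
    by (rule sigma_finite_measure.nn_integral_fst[OF sf]) measurable
  also have "\<dots> \<le> liminf (\<lambda>j. \<integral>\<^sup>+ p. G j p \<partial>(\<nu> \<Otimes>\<^sub>M \<nu>))"
    by (rule nn_integral_liminf) measurable
  also have "\<dots> \<le> ennreal \<epsilon>"
  proof (rule Liminf_le)
    show "\<forall>\<^sub>F j in sequentially. (\<integral>\<^sup>+ p. G j p \<partial>(\<nu> \<Otimes>\<^sub>M \<nu>)) \<le> ennreal \<epsilon>"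
      using eventually_ge_at_top[of k]
    proof eventually_elim
      case (elim j)
      have cV: "comb 1 (b j) (-1) (b k) \<in> V" using bV by (intro V_comb)
      have eq: "(\<lambda>z. b j z - b k z) = comb 1 (b j) (-1) (b k)" by (simp add: comb_def fun_eq_iff)
      have "(\<integral>\<^sup>+ p. G j p \<partial>(\<nu> \<Otimes>\<^sub>M \<nu>)) = ennreal (E2 \<nu> S \<theta> (comb 1 (b j) (-1) (b k)) (comb 1 (b j) (-1) (b k)))"
        unfolding G_def eq using E2_nn[OF cV] by simp
      also have "\<dots> \<le> ennreal \<epsilon>" using bd[OF elim] by (rule ennreal_leI)
      finally show ?case .
    qed
  qed simp
  finally show ?thesis unfolding F_def .
qed

lemma E2_neg_cong: assumes "\<And>y x. u' y - u' x = -(u y - u x)" shows "E2 \<nu> S \<theta> u' u' = E2 \<nu> S \<theta> u u"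
proof -
  have "(u' y - u' x) * (u' y - u' x) = (u y - u x) * (u y - u x)" for y x
    unfolding assms[of y x] by (rule minus_mult_minus)
  then show ?thesis unfolding E2_def by (simp only:)
qed

lemma mean_diff:
  assumes "u \<in> V" "v \<in> V" "set_lebesgue_integral \<nu> S u = 0" "set_lebesgue_integral \<nu> S v = 0"
  shows "set_lebesgue_integral \<nu> S (comb 1 u (-1) v) = 0"
proof -
  have "set_lebesgue_integral \<nu> S (comb 1 u (-1) v) = set_lebesgue_integral \<nu> S (\<lambda>z. u z - v z)"
    by (simp add: comb_def)
  also have "\<dots> = set_lebesgue_integral \<nu> S u - set_lebesgue_integral \<nu> S v"
    using set_int_of_sq[OF V_meas[OF assms(1)] V_sq[OF assms(1)]] set_int_of_sq[OF V_meas[OF assms(2)] V_sq[OF assms(2)]]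
    by (rule set_integral_diff(2))
  finally show ?thesis using assms by simp
qed

lemma completeness:
  fixes u :: "nat \<Rightarrow> 'a \<Rightarrow> real"
  assumes uV: "\<forall>n. u n \<in> V"
    and cauchy: "\<forall>e>0. \<exists>N. \<forall>n\<ge>N. \<forall>m\<ge>N. E2 \<nu> S \<theta> (comb 1 (u n) (-1) (u m)) (comb 1 (u n) (-1) (u m)) < e"
  shows "\<exists>w\<in>V. \<exists>r. strict_mono r \<and> (\<lambda>j. E2 \<nu> S \<theta> (comb 1 (u (r j)) (-1) w) (comb 1 (u (r j)) (-1) w)) \<longlonglongrightarrow> 0
              \<and> (\<lambda>j. Lf (u (r j))) \<longlonglongrightarrow> Lf w"
proof -
  define Q where "Q n m = E2 \<nu> S \<theta> (comb 1 (u n) (-1) (u m)) (comb 1 (u n) (-1) (u m))" for n m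
  define \<delta> where "\<delta> j = (1/8::real)^j / Rp" for j
  have \<delta>pos: "\<delta> j > 0" for j using Rp_pos by (simp add: \<delta>_def)
  have "\<forall>j. \<exists>N. \<forall>n\<ge>N. \<forall>m\<ge>N. Q n m < \<delta> j" using cauchy \<delta>pos unfolding Q_def by blast
  then obtain N where N: "\<And>j n m. n \<ge> N j \<Longrightarrow> m \<ge> N j \<Longrightarrow> Q n m < \<delta> j" by metis
  define r where "r j = (\<Sum>i\<le>j. N i) + j" for j
  have r: "strict_mono r" unfolding strict_mono_Suc_iff r_def by simp
  have rN: "N k \<le> r j" if "k \<le> j" for k j
  proof -
    have "N k \<le> (\<Sum>i\<le>j. N i)" using that by (intro member_le_sum) auto
    then show ?thesis by (simp add: r_def)
  qed
  define cb where "cb n = set_lebesgue_integral \<nu> S (u n) / mS" for n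
  define b where "b j = comb 1 (u (r j)) (- cb (r j)) (\<lambda>z. 1)" for j
  have bV: "b j \<in> V" and bmean: "set_lebesgue_integral \<nu> S (b j) = 0" for j
    using mean_zero_shift[of "u (r j)"] uV by (simp_all add: b_def cb_def)
  have bm[measurable]: "b j \<in> borel_measurable borel" for j using V_meas[OF bV] .
  have Qb: "E2 \<nu> S \<theta> (comb 1 (b j) (-1) (b k)) (comb 1 (b j) (-1) (b k)) = Q (r j) (r k)" for j k
    unfolding Q_def by (rule E2_cong) (simp_all add: b_def comb_def)
  have Qbd: "Q (r j) (r k) < \<delta> k" if "k \<le> j" for j k
    using N rN[OF that] rN[of k k] by simp
  have L2bd: "set_lebesgue_integral \<nu> S (\<lambda>z. (b j z - b k z)\<^sup>2) \<le> (1/8)^k" if "k \<le> j" for j k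
  proof -
    have cV: "comb 1 (b j) (-1) (b k) \<in> V" using bV by (intro V_comb)
    have "set_lebesgue_integral \<nu> S (\<lambda>z. (b j z - b k z)\<^sup>2) = set_lebesgue_integral \<nu> S (\<lambda>z. (comb 1 (b j) (-1) (b k) z)\<^sup>2)"
      by (simp add: comb_def)
    also have "\<dots> \<le> Rp * E2 \<nu> S \<theta> (comb 1 (b j) (-1) (b k)) (comb 1 (b j) (-1) (b k))"
      by (rule poincare[OF cV mean_diff[OF bV bV bmean bmean]])
    also have "\<dots> \<le> Rp * \<delta> k" using Qb Qbd[OF that] Rp_pos by simp
    also have "\<dots> = (1/8)^k" using Rp_pos by (simp add: \<delta>_def)
    finally show ?thesis .
  qed
  have "AE z in \<nu>. convergent (\<lambda>j. b j z)"
    by (rule ae_conv[OF bV]) (rule L2bd, simp)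
  define w where "w z = lim (\<lambda>j. b j z)" for z
  have wm[measurable]: "w \<in> borel_measurable borel" unfolding w_def by measurable
  have conv: "AE z in \<nu>. (\<lambda>j. b j z) \<longlonglongrightarrow> w z"
    using \<open>AE z in \<nu>. convergent (\<lambda>j. b j z)\<close> by eventually_elim (simp add: w_def convergent_LIMSEQ_iff)
  define wk where "wk k = (\<lambda>z. w z - b k z)" for k
  have F2: "(\<integral>\<^sup>+ z. ennreal (indicator S z * (wk k z)\<^sup>2) \<partial>\<nu>) \<le> ennreal ((1/8)^k)" for k
    unfolding wk_def
  proof (rule fatou_L2[OF bm wm conv L2bd])
    fix j
    have "comb 1 (b j) (-1) (b k) \<in> V" using bV by (intro V_comb)
    from V_sq[OF this] show "set_integrable \<nu> S (\<lambda>z. (b j z - b k z)\<^sup>2)" by (simp add: comb_def)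
  qed
  have FQ: "(\<integral>\<^sup>+ p. ennreal (Psi (wk k) (wk k) p) \<partial>(\<nu> \<Otimes>\<^sub>M \<nu>)) \<le> ennreal (\<delta> k)" for k
    unfolding wk_def
  proof (rule fatou_Q[OF bV wm conv])
    fix j assume "k \<le> j"
    then show "E2 \<nu> S \<theta> (comb 1 (b j) (-1) (b k)) (comb 1 (b j) (-1) (b k)) \<le> \<delta> k"
      using Qb Qbd by (simp add: less_imp_le)
  qed
  have wkm[measurable]: "wk k \<in> borel_measurable borel" for k unfolding wk_def by measurable
  have wk_sq: "set_integrable \<nu> S (\<lambda>z. (wk k z)\<^sup>2)" for k
    unfolding set_integrable_def
  proof (rule integrableI_nonneg)
    show "(\<lambda>z. indicator S z *\<^sub>R (wk k z)\<^sup>2) \<in> borel_measurable \<nu>" by (simp add: meas_nu_iff) measurable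
    show "AE x in \<nu>. 0 \<le> indicator S x *\<^sub>R (wk k x)\<^sup>2" by simp
    have "(\<integral>\<^sup>+ z. ennreal (indicator S z *\<^sub>R (wk k z)\<^sup>2) \<partial>\<nu>) \<le> ennreal ((1/8)^k)" using F2[of k] by simp
    also have "\<dots> < \<infinity>" by simp
    finally show "(\<integral>\<^sup>+ z. ennreal (indicator S z *\<^sub>R (wk k z)\<^sup>2) \<partial>\<nu>) < \<infinity>" .
  qed
  have wkV: "wk k \<in> V" for k
  proof (rule VI)
    show "wk k \<in> borel_measurable borel" by measurable
    show "set_integrable \<nu> S (\<lambda>z. (wk k z)\<^sup>2)" by (rule wk_sq)
    have "(\<integral>\<^sup>+ p. ennreal (Psi (wk k) (wk k) p) \<partial>(\<nu> \<Otimes>\<^sub>M \<nu>)) \<le> ennreal (\<delta> k)" by (rule FQ)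
    also have "\<dots> < \<infinity>" by simp
    finally show "(\<integral>\<^sup>+ p. ennreal (Psi (wk k) (wk k) p) \<partial>(\<nu> \<Otimes>\<^sub>M \<nu>)) < \<infinity>" .
  qed
  have wV: "w \<in> V"
  proof -
    have "w = comb 1 (wk 0) 1 (b 0)" by (simp add: wk_def comb_def fun_eq_iff)
    then show ?thesis using wkV bV V_comb by metis
  qed
  have E2wk: "E2 \<nu> S \<theta> (wk k) (wk k) \<le> \<delta> k" for k
  proof -
    have "ennreal (E2 \<nu> S \<theta> (wk k) (wk k)) \<le> ennreal (\<delta> k)" using E2_nn[OF wkV] FQ by simp
    then show ?thesis using \<delta>pos[of k] by (simp add: ennreal_le_iff less_imp_le)
  qed
  have \<delta>0: "\<delta> \<longlonglongrightarrow> 0"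
  proof -
    have "(\<lambda>j. (1/8::real)^j / Rp) \<longlonglongrightarrow> 0 / Rp"
      by (intro tendsto_divide LIMSEQ_power_zero tendsto_const) (use Rp_pos in auto)
    then show ?thesis by (simp add: \<delta>_def[abs_def])
  qed
  have T1: "(\<lambda>j. E2 \<nu> S \<theta> (comb 1 (u (r j)) (-1) w) (comb 1 (u (r j)) (-1) w)) \<longlonglongrightarrow> 0"
  proof (rule tendsto_sandwich[of "\<lambda>j. 0" _ _ \<delta>])
    have eq: "E2 \<nu> S \<theta> (comb 1 (u (r j)) (-1) w) (comb 1 (u (r j)) (-1) w) = E2 \<nu> S \<theta> (wk j) (wk j)" for j
      by (rule E2_neg_cong) (simp add: comb_def wk_def b_def)
    show "\<forall>\<^sub>F j in sequentially. 0 \<le> E2 \<nu> S \<theta> (comb 1 (u (r j)) (-1) w) (comb 1 (u (r j)) (-1) w)"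
      using E2_pos wkV eq by simp
    show "\<forall>\<^sub>F j in sequentially. E2 \<nu> S \<theta> (comb 1 (u (r j)) (-1) w) (comb 1 (u (r j)) (-1) w) \<le> \<delta> j"
      using E2wk eq by simp
  qed (simp_all add: \<delta>0)
  have T2: "(\<lambda>j. Lf (u (r j))) \<longlonglongrightarrow> Lf w"
  proof -
    define F where "F = set_lebesgue_integral \<nu> S (\<lambda>x. (f x)\<^sup>2)"
    have F0: "F \<ge> 0" unfolding F_def set_lebesgue_integral_def by (intro integral_nonneg_AE) auto
    have Lu: "Lf (u (r j)) = Lf w - Lf (wk j)" for j
    proof -
      have "Lf (u (r j)) = Lf (b j)" unfolding b_def using L_shift uV by simp
      moreover have "Lf (wk j) = Lf w - Lf (b j)"
      proof -
        have "wk j = comb 1 w (-1) (b j)" by (simp add: wk_def comb_def fun_eq_iff)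
        then show ?thesis using L_lin[OF wV bV] by simp
      qed
      ultimately show ?thesis by simp
    qed
    have sq: "set_lebesgue_integral \<nu> S (\<lambda>z. (wk j z)\<^sup>2) \<le> (1/8)^j" for j
    proof -
      have "ennreal (set_lebesgue_integral \<nu> S (\<lambda>z. (wk j z)\<^sup>2)) = (\<integral>\<^sup>+ z. ennreal (indicator S z * (wk j z)\<^sup>2) \<partial>\<nu>)"
        unfolding set_lebesgue_integral_def using wk_sq[of j]
        by (subst nn_integral_eq_integral) (auto simp: set_integrable_def)
      also have "\<dots> \<le> ennreal ((1/8)^j)" by (rule F2)
      finally show ?thesis by (simp add: ennreal_le_iff)
    qed
    have bound: "norm (Lf (wk j)) \<le> sqrt ((1/8)^j * F)" for j
    proof -
      have "(Lf (wk j))^2 \<le> set_lebesgue_integral \<nu> S (\<lambda>z. (wk j z)\<^sup>2) * F" unfolding F_def by (rule L_cs[OF wkV])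
      also have "\<dots> \<le> (1/8)^j * F" using sq F0 by (intro mult_right_mono) auto
      finally have "sqrt ((Lf (wk j))^2) \<le> sqrt ((1/8)^j * F)" by (rule real_sqrt_le_mono)
      then show ?thesis by simp
    qed
    have "(\<lambda>j. sqrt ((1/8::real)^j * F)) \<longlonglongrightarrow> sqrt (0 * F)"
      by (intro tendsto_intros LIMSEQ_power_zero) auto
    then have "(\<lambda>j. sqrt ((1/8::real)^j * F)) \<longlonglongrightarrow> 0" by simp
    then have "(\<lambda>j. Lf (wk j)) \<longlonglongrightarrow> 0"
      by (rule Lim_null_comparison[OF always_eventually, rotated]) (use bound in auto)
    then have "(\<lambda>j. Lf w - Lf (wk j)) \<longlonglongrightarrow> Lf w - 0" by (intro tendsto_intros)
    then show ?thesis using Lu by simp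
  qed
  show ?thesis using wV r T1 T2 by blast
qed

theorem solution: "\<exists>w\<in>V. \<forall>v\<in>V. E2 \<nu> S \<theta> w v = - Lf v"
proof -
  interpret A: absform V "E2 \<nu> S \<theta>" Lf Kf
    apply unfold_locales
           apply (rule V_const)
          apply (erule (1) V_comb)
         apply (erule (1) E2_sym)
        apply (rule E2_lin; assumption)
       apply (erule E2_pos)
      apply (rule L_lin; assumption)
     apply (erule L_bound)
    apply (rule completeness; assumption)
    done
  show ?thesis by (rule A.exists_solution)
qed

end


lemma compact_countable_dense:
  fixes K :: "'a::metric_space set"
  assumes K: "compact K"
  shows "\<exists>D. countable D \<and> K \<subseteq> closure D"
proof -
  have "\<exists>C. C \<subseteq> K \<and> finite C \<and> K \<subseteq> (\<Union>c\<in>C. ball c (1 / (real n + 1)))" for n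
  proof -
    have "K \<subseteq> (\<Union>c\<in>K. ball c (1 / (real n + 1)))" by auto
    from compactE_image[OF K _ this] show ?thesis by (metis open_ball)
  qed
  then obtain C where C: "\<And>n. C n \<subseteq> K" "\<And>n. finite (C n)" "\<And>n. K \<subseteq> (\<Union>c\<in>C n. ball c (1 / (real n + 1)))"
    by metis
  define D where "D = (\<Union>n. C n)"
  have "countable D" unfolding D_def using C(2) by (intro countable_UN) (auto intro: countable_finite)
  moreover have "K \<subseteq> closure D"
  proof
    fix x assume x: "x \<in> K"
    show "x \<in> closure D" unfolding closure_approachable
    proof (intro allI impI)
      fix e :: real assume e: "e > 0"
      obtain n :: nat where n: "1 / e < real n" using reals_Archimedean2 by blast
      have n': "1 / (real n + 1) < e" using n e by (simp add: field_simps)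
      from C(3)[of n] x obtain c where c: "c \<in> C n" "dist c x < 1 / (real n + 1)" by auto
      then have "c \<in> D" "dist c x < e" using n' unfolding D_def by auto
      then show "\<exists>y\<in>D. dist y x < e" by blast
    qed
  qed
  ultimately show ?thesis by blast
qed

lemma radon_countable_dense:
  fixes \<nu> :: "'a::metric_space measure"
  assumes R: "radon_measure \<nu>" and fin: "emeasure \<nu> UNIV < \<infinity>"
  shows "\<exists>D. countable D \<and> emeasure \<nu> (- closure D) = 0"
proof -
  have sets: "sets \<nu> = sets borel" using R by (simp add: radon_measure_def)
  have sp: "space \<nu> = UNIV" using sets_eq_imp_space_eq[OF sets] by simp
  have inner: "emeasure \<nu> UNIV = (SUP K\<in>{K. compact K \<and> K \<subseteq> UNIV}. emeasure \<nu> K)"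
    using R unfolding radon_measure_def by blast
  have "\<exists>K. compact K \<and> emeasure \<nu> (- K) < ennreal (1 / (real n + 1))" for n
  proof (cases "emeasure \<nu> UNIV = 0")
    case True
    then have "emeasure \<nu> (- {}) = 0" by simp
    then show ?thesis by (intro exI[of _ "{}"]) auto
  next
    case False
    define m where "m = measure \<nu> UNIV"
    have fU: "emeasure \<nu> UNIV \<noteq> top" using fin by simp
    have m: "emeasure \<nu> UNIV = ennreal m" unfolding m_def using fU by (rule emeasure_eq_ennreal_measure)
    have mpos: "m > 0" using False m by (metis ennreal_0 measure_nonneg m_def order_le_less)
    have "ennreal (m - 1 / (real n + 1)) < ennreal m"
    proof (cases "m - 1 / (real n + 1) \<le> 0")
      case True
      then show ?thesis using mpos by (simp add: ennreal_neg)
    next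
      case False
      then show ?thesis using mpos by (subst ennreal_less_iff) auto
    qed
    then have "ennreal (m - 1 / (real n + 1)) < emeasure \<nu> UNIV" using m by simp
    then obtain K where K: "compact K" "ennreal (m - 1 / (real n + 1)) < emeasure \<nu> K"
      unfolding inner less_SUP_iff by auto
    have Kb: "K \<in> sets \<nu>" using K(1) sets by (simp add: compact_imp_closed borel_closed)
    have Kc: "- K \<in> sets \<nu>" using Kb sets by simp
    have fK: "emeasure \<nu> K \<noteq> top" using fU emeasure_mono[of K UNIV \<nu>] sp
      by (metis emeasure_space top.extremum_uniqueI)
    have fC: "emeasure \<nu> (- K) \<noteq> top" using fU emeasure_mono[of "- K" UNIV \<nu>] sp
      by (metis emeasure_space top.extremum_uniqueI)
    have eK: "emeasure \<nu> K = ennreal (measure \<nu> K)" using fK by (rule emeasure_eq_ennreal_measure)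
    have eC: "emeasure \<nu> (- K) = ennreal (measure \<nu> (- K))" using fC by (rule emeasure_eq_ennreal_measure)
    have "emeasure \<nu> UNIV = emeasure \<nu> K + emeasure \<nu> (- K)"
      using Kb Kc by (subst plus_emeasure) auto
    then have "ennreal m = ennreal (measure \<nu> K + measure \<nu> (- K))"
      using m eK eC by (simp add: ennreal_plus)
    then have msum: "m = measure \<nu> K + measure \<nu> (- K)"
      by (subst (asm) ennreal_inj) (auto simp: m_def)
    have "m - 1 / (real n + 1) < measure \<nu> K"
      using K(2) eK by (metis ennreal_leI not_le)
    then have "measure \<nu> (- K) < 1 / (real n + 1)" using msum by simp
    then have "emeasure \<nu> (- K) < ennreal (1 / (real n + 1))" using eC by (simp add: ennreal_lessI)
    then show ?thesis using K(1) by blast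
  qed
  then obtain K where K: "\<And>n. compact (K n)" "\<And>n. emeasure \<nu> (- K n) < ennreal (1 / (real n + 1))"
    by metis
  have "\<exists>Dn. countable Dn \<and> K n \<subseteq> closure Dn" for n using compact_countable_dense[OF K(1)] .
  then obtain Dn where Dn: "\<And>n. countable (Dn n)" "\<And>n. K n \<subseteq> closure (Dn n)" by metis
  define D where "D = (\<Union>n. Dn n)"
  have cD: "countable D" unfolding D_def by (intro countable_UN) (auto simp: Dn(1))
  have small: "emeasure \<nu> (- closure D) \<le> ennreal (1 / (real n + 1))" for n
  proof -
    have "Dn n \<subseteq> D" by (auto simp: D_def)
    then have "closure (Dn n) \<subseteq> closure D" by (rule closure_mono)
    then have "K n \<subseteq> closure D" using Dn(2)[of n] by (rule subset_trans[rotated])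
    then have sub: "- closure D \<subseteq> - K n" by blast
    have "closed (K n)" using K(1) by (rule compact_imp_closed)
    then have "- K n \<in> sets \<nu>" using sets by (simp add: borel_closed)
    then have "emeasure \<nu> (- closure D) \<le> emeasure \<nu> (- K n)" using sub by (rule emeasure_mono[rotated])
    also have "\<dots> \<le> ennreal (1 / (real n + 1))" using K(2)[of n] by (rule less_imp_le)
    finally show ?thesis .
  qed
  have "emeasure \<nu> (- closure D) \<le> 0"
  proof (rule ennreal_le_epsilon)
    fix e :: real assume e: "0 < e"
    obtain n :: nat where n: "1 / e < real n" using reals_Archimedean2 by blast
    have "1 / (real n + 1) < e" using n e by (simp add: field_simps)
    then have "ennreal (1 / (real n + 1)) \<le> ennreal e" by (intro ennreal_leI) simp
    with small[of n] have "emeasure \<nu> (- closure D) \<le> ennreal e" by (rule order_trans)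
    then show "emeasure \<nu> (- closure D) \<le> 0 + ennreal e" by simp
  qed
  then show ?thesis using cD by (intro exI[of _ D]) simp
qed

lemma arclength_dist:
  assumes "arclength_curve \<gamma> l"
  shows "dist (\<gamma> 0) (\<gamma> l) \<le> l"
proof -
  have l: "0 \<le> l" and cl: "curve_length \<gamma> 0 l = ennreal l"
    using assms by (auto simp: arclength_curve_def)
  define p :: "nat \<Rightarrow> real" where "p i = (if i = 0 then 0 else l)" for i
  have mem: "(1::nat, p) \<in> {(n, p). p 0 = 0 \<and> p n = l \<and> (\<forall>i<n. p i \<le> p (Suc i))}"
    using l by (simp add: p_def)
  have "ennreal (\<Sum>i<1. dist (\<gamma> (p i)) (\<gamma> (p (Suc i)))) \<le> curve_length \<gamma> 0 l"
    unfolding curve_length_def by (rule SUP_upper2[OF mem]) simp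
  then have "ennreal (dist (\<gamma> 0) (\<gamma> l)) \<le> ennreal l" using cl by (simp add: p_def)
  then show ?thesis using l by (simp add: ennreal_le_iff)
qed

lemma john_bounded:
  assumes "john_domain \<Omega>"
  shows "\<exists>x0 M. \<Omega> \<subseteq> cball x0 M"
proof -
  obtain C x0 where C: "C \<ge> 1" "x0 \<in> \<Omega>" and J: "\<forall>x\<in>\<Omega>. \<exists>l \<gamma>. arclength_curve \<gamma> l \<and> \<gamma> 0 = x \<and> \<gamma> l = x0 \<and>
        \<gamma> ` {0..l} \<subseteq> \<Omega> \<and> (\<forall>t\<in>{0..l}. t \<le> C * infdist (\<gamma> t) (- \<Omega>))"
    using assms unfolding john_domain_def by blast
  have "\<Omega> \<subseteq> cball x0 (C * infdist x0 (- \<Omega>))"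
  proof
    fix x assume x: "x \<in> \<Omega>"
    then obtain l \<gamma> where g: "arclength_curve \<gamma> l" "\<gamma> 0 = x" "\<gamma> l = x0"
      "\<forall>t\<in>{0..l}. t \<le> C * infdist (\<gamma> t) (- \<Omega>)" using J by blast
    have l: "0 \<le> l" using g(1) by (simp add: arclength_curve_def)
    have "dist x x0 \<le> l" using arclength_dist[OF g(1)] g(2,3) by simp
    also have "l \<le> C * infdist x0 (- \<Omega>)" using g(4) l g(3) by auto
    finally show "x \<in> cball x0 (C * infdist x0 (- \<Omega>))" by (simp add: dist_commute)
  qed
  then show ?thesis by blast
qed

theorem mainTheorem11:
  fixes \<mu> \<nu> :: "'a::complete_space measure"
    and \<Omega> :: "'a set" and \<Theta> :: real and f :: "'a \<Rightarrow> real"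
  defines "\<theta> \<equiv> 1 - \<Theta> / 2"
  assumes mu_radon: "radon_measure \<mu>"
    and Omega_open: "open \<Omega>" and Omega_conn: "connected \<Omega>"
    and H0: "john_domain \<Omega>"
    and H1_doubling: "doubling_on \<mu> (closure \<Omega>)"
    and H1_poincare: "poincare2_on \<mu> (closure \<Omega>)"
    and nu_radon: "radon_measure \<nu>"
    and nu_supp: "emeasure \<nu> (- (closure \<Omega> - \<Omega>)) = 0"
    and Theta: "0 < \<Theta>" "\<Theta> < 2"
    and H2: "\<exists>C>0. \<forall>x\<in>closure \<Omega> - \<Omega>. \<forall>r. 0 < r \<and> r < 2 * diameter (closure \<Omega> - \<Omega>) \<longrightarrow>
               emeasure \<mu> (ball x r \<inter> \<Omega>) * ennreal (r powr (-\<Theta>)) / ennreal C \<le> emeasure \<nu> (ball x r) \<and>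
               emeasure \<nu> (ball x r) \<le> ennreal C * emeasure \<mu> (ball x r \<inter> \<Omega>) * ennreal (r powr (-\<Theta>))"
    and nu_pos_fin: "0 < emeasure \<nu> (closure \<Omega> - \<Omega>)" "emeasure \<nu> (closure \<Omega> - \<Omega>) < \<infinity>"
    and f_meas: "f \<in> borel_measurable \<nu>"
    and f_L2: "set_integrable \<nu> (closure \<Omega> - \<Omega>) (\<lambda>x. (f x)\<^sup>2)"
    and f_mean: "(\<integral> x\<in>closure \<Omega> - \<Omega>. f x \<partial>\<nu>) = 0"
  shows "\<exists>w\<in>besov22 \<nu> (closure \<Omega> - \<Omega>) \<theta>.
           \<forall>v\<in>besov22 \<nu> (closure \<Omega> - \<Omega>) \<theta>.
             E2 \<nu> (closure \<Omega> - \<Omega>) \<theta> w v = - (\<integral> x\<in>closure \<Omega> - \<Omega>. v x * f x \<partial>\<nu>)"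
proof -
  define S where "S = closure \<Omega> - \<Omega>"
  have sets: "sets \<nu> = sets borel" using nu_radon by (simp add: radon_measure_def)
  have sp: "space \<nu> = UNIV" using sets_eq_imp_space_eq[OF sets] by simp
  have thpos: "\<theta> > 0" using Theta by (simp add: \<theta>_def)
  have Sb: "S \<in> sets borel"
  proof -
    have "closed (closure \<Omega> \<inter> - \<Omega>)" using Omega_open by (intro closed_Int) auto
    then show ?thesis by (simp add: S_def Diff_eq borel_closed)
  qed
  have finU: "emeasure \<nu> UNIV < \<infinity>"
  proof -
    have "emeasure \<nu> UNIV = emeasure \<nu> S + emeasure \<nu> (- S)"
      using Sb sets by (subst plus_emeasure) (auto simp: Compl_eq_Diff_UNIV sp)
    then show ?thesis using nu_supp nu_pos_fin by (simp add: S_def)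
  qed
  obtain D where D: "countable D" "emeasure \<nu> (- closure D) = 0"
    using radon_countable_dense[OF nu_radon finU] by blast
  obtain x0 M where xM: "\<Omega> \<subseteq> cball x0 M" using john_bounded[OF H0] by blast
  have cl: "closure \<Omega> \<subseteq> cball x0 M" using xM by (intro closure_minimal) auto
  define R where "R = 2 * \<bar>M\<bar> + 1"
  have Rpos: "R > 0" by (simp add: R_def)
  have Sbd: "dist x y \<le> R" if "x \<in> S" "y \<in> S" for x y
  proof -
    have "dist x0 x \<le> M" "dist x0 y \<le> M" using that cl by (auto simp: S_def)
    moreover have "dist x y \<le> dist x0 x + dist x0 y" by (simp add: dist_triangle3)
    ultimately show ?thesis by (simp add: R_def)
  qed
  have fm: "f \<in> borel_measurable borel" using f_meas by (simp add: measurable_def sets sp)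
  interpret bsetf \<nu> S \<theta> D R f
  proof
    show "sets \<nu> = sets borel" by (rule sets)
    show "S \<in> sets borel" by (rule Sb)
    show "emeasure \<nu> (- S) = 0" "0 < emeasure \<nu> S" "emeasure \<nu> S < \<infinity>"
      using nu_supp nu_pos_fin by (simp_all add: S_def)
    show "countable D" "emeasure \<nu> (- closure D) = 0" by (rule D(1), rule D(2))
    show "R > 0" by (rule Rpos)
    show "\<And>x y. x \<in> S \<Longrightarrow> y \<in> S \<Longrightarrow> dist x y \<le> R" by (rule Sbd)
    show "\<theta> > 0" by (rule thpos)
    show "f \<in> borel_measurable borel" by (rule fm)
    show "set_integrable \<nu> S (\<lambda>x. (f x)\<^sup>2)" using f_L2 by (simp add: S_def)
    show "set_lebesgue_integral \<nu> S f = 0" using f_mean by (simp add: S_def)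
  qed
  from solution show ?thesis unfolding Lf_def by (simp add: S_def)
qed


end
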